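(* Let $G$ be an abelian group of order $9p^{4s}$, where $p\ge 5$ is a prime and $s$ is a positive integer. Then there does not exist a $(9p^{4s},\ r(3p^{2s}+1),\ -3p^{2s}+r^2+3r,\ r^2+r)$-partial difference set in $G$ with $r=(3p^{2s}-5)/2$.
   Context: For a finite abelian group $G$ of order $v$, a subset $D\subseteq G$ of size $k$ is a $(v,k,\lambda,\mu)$-partial difference set (PDS) if the expressions $gh^{-1}$ with $g,h\in D$, $g\ne h$, represent each non-identity element of $D$ exactly $\lambda$ times and each non-identity element of $G\setminus D$ exactly $\mu$ times. *)

theory Defs
  imports "HOL-Algebra.Algebra" "HOL-Computational_Algebra.Primes"
begin

text \<open>Parameters are integers (lambda is given by an integer
  expression in the paper).\<close>

definition is_pds :: "('a, 'b) monoid_scheme \<Rightarrow> 'a set \<Rightarrow> int \<Rightarrow> int \<Rightarrow> int \<Rightarrow> int \<Rightarrow> bool" where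
  "is_pds G D v k lam mu \<longleftrightarrow>
     D \<subseteq> carrier G \<and> int (card (carrier G)) = v \<and> int (card D) = k \<and>
     (\<forall>x \<in> carrier G - {\<one>\<^bsub>G\<^esub>}.
        int (card {(g, h). g \<in> D \<and> h \<in> D \<and> g \<noteq> h \<and> g \<otimes>\<^bsub>G\<^esub> inv\<^bsub>G\<^esub> h = x})
          = (if x \<in> D then lam else mu))"

end

theory Submission
  imports Defs "HOL-Number_Theory.Number_Theory"
begin

lemma fermat_int:
  fixes x :: int and q :: nat
  assumes q: "Factorial_Ring.prime q"
  shows "[x ^ q = x] (mod int q)"
proof -
  have qpos: "int q > 0" using q prime_gt_0_nat by auto
  define a where "a = nat (x mod int q)"
  have xa: "[x = int a] (mod int q)"
    using qpos unfolding a_def cong_def by simp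
  have "[a ^ q = a] (mod q)"
  proof (cases "q dvd a")
    case True
    then have "[a = 0] (mod q)" by (simp add: cong_0_iff)
    moreover have "[a ^ q = 0 ^ q] (mod q)" using calculation cong_pow by blast
    ultimately show ?thesis using q prime_gt_0_nat
      by (metis cong_sym cong_trans power_0_left zero_less_iff_neq_zero neq0_conv)
  next
    case False
    then have "[a ^ (q - 1) = 1] (mod q)" using fermat_theorem q by blast
    then have "[a ^ (q - 1) * a = 1 * a] (mod q)" using cong_mult cong_refl by blast
    moreover have "a ^ (q - 1) * a = a ^ q" using q prime_gt_0_nat
      by (metis Suc_diff_1 power_Suc2)
    ultimately show ?thesis by simp
  qed
  then have "[int a ^ q = int a] (mod int q)"
    by (metis cong_int_iff of_nat_power)
  moreover have "[x ^ q = int a ^ q] (mod int q)" using xa cong_pow by blast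
  ultimately show ?thesis using xa cong_sym cong_trans by blast
qed

lemma involution_parity:
  assumes "finite A" "\<And>a. a \<in> A \<Longrightarrow> f a \<in> A" "\<And>a. a \<in> A \<Longrightarrow> f (f a) = a"
  shows "even (card A + card {a\<in>A. f a = a})"
  using assms
proof (induction "card A" arbitrary: A rule: less_induct)
  case less
  show ?case
  proof (cases "\<exists>a\<in>A. f a \<noteq> a")
    case False
    then have "{a\<in>A. f a = a} = A" by auto
    then show ?thesis by simp
  next
    case True
    then obtain a where a: "a \<in> A" "f a \<noteq> a" by blast
    define A' where "A' = A - {a, f a}"
    have fa: "f a \<in> A" using less.prems a by blast
    have ffa: "f (f a) = a" using less.prems a by blast
    have cardA: "card A = card A' + 2"
    proof -
      have sub: "{a, f a} \<subseteq> A" using a fa by blast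
      have c2: "card {a, f a} = 2" using a by simp
      have "card A' = card A - card {a, f a}"
        unfolding A'_def using sub less.prems(1) by (simp add: card_Diff_subset finite_subset)
      moreover have "card {a, f a} \<le> card A" using sub less.prems(1) card_mono by blast
      ultimately show ?thesis using c2 by simp
    qed
    have fix_eq: "{b\<in>A'. f b = b} = {b\<in>A. f b = b}"
    proof
      show "{b\<in>A'. f b = b} \<subseteq> {b\<in>A. f b = b}" unfolding A'_def by blast
      show "{b\<in>A. f b = b} \<subseteq> {b\<in>A'. f b = b}"
      proof
        fix b assume b: "b \<in> {b\<in>A. f b = b}"
        then have "b \<noteq> a" using a by auto
        moreover have "b \<noteq> f a" using b ffa a by auto
        ultimately show "b \<in> {b\<in>A'. f b = b}" using b unfolding A'_def by blast
      qed
    qed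
    have "even (card A' + card {b\<in>A'. f b = b})"
    proof (rule less.hyps)
      show "card A' < card A" using cardA by simp
      show "finite A'" unfolding A'_def using less.prems(1) by blast
      fix b assume b: "b \<in> A'"
      then have bA: "b \<in> A" and ba: "b \<noteq> a" and bfa: "b \<noteq> f a" unfolding A'_def by auto
      show "f (f b) = b" using bA less.prems(3) by blast
      have "f b \<in> A" using bA less.prems(2) by blast
      moreover have "f b \<noteq> a" using bfa less.prems(3)[OF bA] ffa by metis
      moreover have "f b \<noteq> f a" using ba less.prems(3)[OF bA] ffa by metis
      ultimately show "f b \<in> A'" unfolding A'_def by blast
    qed
    then show ?thesis using cardA fix_eq by simp
  qed
qed

definition const_list :: "'a list \<Rightarrow> bool" where
  "const_list l \<longleftrightarrow> (\<forall>x\<in>set l. \<forall>y\<in>set l. x = y)"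

lemma rotate1_fix_const:
  assumes "rotate1 l = l" shows "const_list l"
proof -
  have step: "l ! n = l ! (Suc n mod length l)" if "n < length l" for n
    using nth_rotate1[OF that] assms by simp
  have all0: "l ! n = l ! 0" if "n < length l" for n
    using that
  proof (induction n)
    case 0 then show ?case by simp
  next
    case (Suc n)
    then have "l ! n = l ! (Suc n mod length l)" using step by simp
    moreover have "Suc n mod length l = Suc n" using Suc.prems by simp
    ultimately show ?case using Suc by simp
  qed
  show ?thesis
  proof (unfold const_list_def, intro ballI)
    fix x y assume "x \<in> set l" "y \<in> set l"
    then obtain i j where "i < length l" "x = l ! i" "j < length l" "y = l ! j"
      by (auto simp: in_set_conv_nth)
    then show "x = y" using all0 by simp
  qed
qed

lemma rotate_fix_const:
  assumes q: "Factorial_Ring.prime (length l)" and d: "0 < d" "d < length l" and fx: "rotate d l = l"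
  shows "const_list l"
proof -
  have multi: "rotate (d * e) l = l" for e
  proof (induction e)
    case 0 then show ?case by simp
  next
    case (Suc e)
    have "rotate (d * Suc e) l = rotate d (rotate (d * e) l)"
      by (simp add: rotate_rotate add.commute)
    then show ?case using Suc fx by simp
  qed
  have "\<not> length l dvd d" using d by (simp add: nat_dvd_not_less)
  then have "coprime (length l) d" by (rule prime_imp_coprime[OF q])
  then have "coprime d (length l)" by (simp add: coprime_commute)
  then obtain e where e: "[d * e = Suc 0] (mod length l)"
    using cong_solve_coprime_nat by presburger
  have q1: "length l > 1" using q prime_gt_1_nat by blast
  have "(d * e) mod length l = 1" using e q1 unfolding cong_def by simp
  then have "rotate1 l = rotate ((d * e) mod length l) l" by simp
  also have "\<dots> = rotate (d * e) l" by (simp flip: rotate_conv_mod)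
  also have "\<dots> = l" using multi by simp
  finally show ?thesis by (rule rotate1_fix_const)
qed

lemma rotation_dvd:
  assumes q: "Factorial_Ring.prime q" and fin: "finite S" and len: "\<And>l. l \<in> S \<Longrightarrow> length l = q"
    and clos: "\<And>l. l \<in> S \<Longrightarrow> rotate1 l \<in> S"
  shows "q dvd card {l\<in>S. \<not> const_list l}"
proof -
  define S' where "S' = {l\<in>S. \<not> const_list l}"
  have closr: "rotate n l \<in> S" if "l \<in> S" for n l
    using that
  proof (induction n)
    case 0 then show ?case by simp
  next
    case (Suc n) then show ?case using clos by (simp add: rotate1_rotate_swap[symmetric])
  qed
  have constrot: "const_list (rotate n l) = const_list l" for n and l :: "'a list"
    unfolding const_list_def by simp
  have closr': "rotate n l \<in> S'" if "l \<in> S'" for n l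
    using that closr constrot unfolding S'_def by auto
  define orb where "orb l = (\<lambda>i. rotate i l) ` {..<q}" for l :: "'a list"
  have orb_card: "card (orb l) = q" if "l \<in> S'" for l
  proof -
    have lq: "length l = q" using that len unfolding S'_def by auto
    have "inj_on (\<lambda>i. rotate i l) {..<q}"
    proof (rule inj_onI, rule ccontr)
      fix i j assume i: "i \<in> {..<q}" and j: "j \<in> {..<q}" and eq: "rotate i l = rotate j l" and ne: "i \<noteq> j"
      have gen: "const_list l" if "i' < q" "j' < q" "i' < j'" "rotate i' l = rotate j' l" for i' j'
      proof -
        have "rotate (q - i') (rotate j' l) = rotate (q - i') (rotate i' l)" using that by simp
        then have "rotate (q - i' + j') l = rotate (q - i' + i') l" by (simp add: rotate_rotate)
        also have "q - i' + i' = q" using that by simp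
        finally have "rotate (q - i' + j') l = l" using lq by simp
        moreover have "q - i' + j' = q + (j' - i')" using that by simp
        ultimately have "rotate (j' - i') l = l" using lq
          by (metis rotate_conv_mod mod_add_self1)
        then show ?thesis using rotate_fix_const[of l "j' - i'"] lq q that by simp
      qed
      have "const_list l"
      proof (cases "i < j")
        case True then show ?thesis using gen i j eq by auto
      next
        case False then have "j < i" using ne by simp
        then show ?thesis using gen i j eq by auto
      qed
      then show False using that unfolding S'_def by simp
    qed
    then show ?thesis unfolding orb_def by (simp add: card_image)
  qed
  have orb_sub: "orb l \<subseteq> S'" if "l \<in> S'" for l
    unfolding orb_def using closr' that by auto
  have orb_self: "l \<in> orb l" if "l \<in> S'" for l
  proof -
    have "q > 0" using q prime_gt_0_nat by blast
    then show ?thesis unfolding orb_def by force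
  qed
  have rot_in: "rotate m x \<in> orb x" if "length x = q" for m x
  proof -
    have qpos: "q > 0" using q prime_gt_0_nat by blast
    have "rotate m x = rotate (m mod q) x" using that rotate_conv_mod by metis
    moreover have "m mod q \<in> {..<q}" using qpos by simp
    ultimately show ?thesis unfolding orb_def by blast
  qed
  have orb_eq: "orb (rotate j l) = orb l" if "l \<in> S'" for l j
  proof -
    have lq: "length l = q" using that len unfolding S'_def by auto
    have qpos: "q > 0" using q prime_gt_0_nat by blast
    have "rotate i (rotate j l) \<in> orb l" for i
      unfolding rotate_rotate using lq by (rule rot_in)
    moreover have "rotate i l \<in> orb (rotate j l)" for i
    proof -
      have e1: "rotate (i + (q - 1) * j) (rotate j l) = rotate (i + (q - 1) * j + j) l"
        by (simp add: rotate_rotate)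
      have "i + (q - 1) * j + j = i + q * j" using qpos
        by (metis add.assoc mult_eq_if Suc_diff_1 mult_Suc add.commute)
      then have "rotate (i + (q - 1) * j + j) l = rotate ((i + q * j) mod q) l"
        using lq rotate_conv_mod by metis
      also have "(i + q * j) mod q = i mod q" by simp
      also have "rotate (i mod q) l = rotate i l" using lq rotate_conv_mod by metis
      finally have "rotate i l = rotate (i + (q - 1) * j) (rotate j l)" using e1 by simp
      then show ?thesis using rot_in[of "rotate j l"] lq by simp
    qed
    ultimately show ?thesis unfolding orb_def by blast
  qed
  have disj: "pairwise disjnt (orb ` S')"
  proof (rule pairwiseI)
    fix A B assume A: "A \<in> orb ` S'" and B: "B \<in> orb ` S'" and ne: "A \<noteq> B"
    then obtain a b where a: "a \<in> S'" "A = orb a" and b: "b \<in> S'" "B = orb b" by blast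
    show "disjnt A B"
    proof (rule ccontr)
      assume "\<not> disjnt A B"
      then obtain c where "c \<in> orb a" "c \<in> orb b" using a b unfolding disjnt_def by blast
      then obtain i j where "c = rotate i a" "c = rotate j b" unfolding orb_def by blast
      then have "orb a = orb b" using orb_eq[OF a(1), of i] orb_eq[OF b(1), of j] by simp
      then show False using ne a b by simp
    qed
  qed
  have finS': "finite S'" using fin unfolding S'_def by simp
  have union: "\<Union>(orb ` S') = S'" using orb_sub orb_self by blast
  have "card S' = sum card (orb ` S')"
    using card_Union_disjoint[OF disj] union finS' orb_sub
    by (metis finite_subset imageE)
  also have "\<dots> = sum (\<lambda>_. q) (orb ` S')"
    by (rule sum.cong) (auto simp: orb_card)
  also have "\<dots> = q * card (orb ` S')" by simp
  finally show ?thesis unfolding S'_def by simp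
qed

definition cset :: "('a, 'b) monoid_scheme \<Rightarrow> 'a set \<Rightarrow> 'a \<Rightarrow> ('a \<times> 'a) set" where
  "cset G D x = {(g, h). g \<in> D \<and> h \<in> D \<and> g \<noteq> h \<and> g \<otimes>\<^bsub>G\<^esub> inv\<^bsub>G\<^esub> h = x}"

locale pdsl = comm_group G for G (structure) +
  fixes D :: "'a set" and M :: nat and p :: nat and e :: nat and u :: int
  assumes fin: "finite (carrier G)"
    and cardG: "card (carrier G) = 9 * M"
    and Mdef: "M = p ^ e" and epos: "e > 0"
    and pprime: "Factorial_Ring.prime p" and p5: "p \<ge> 5"
    and MN: "int M = (2 * u + 1) ^ 2" and upos: "u \<ge> 0"
    and Dsub: "D \<subseteq> carrier G"
    and cardD: "int (card D) = (3*u - 1) * (3 * (2*u+1) + 1)"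
    and pds: "\<And>x. x \<in> carrier G - {\<one>} \<Longrightarrow> int (card (cset G D x)) =
        (if x \<in> D then - 3 * (2*u+1) + (3*u-1)^2 + 3 * (3*u-1) else (3*u-1)^2 + (3*u-1))"
begin

definition "kk = (3*u - 1) * (3 * (2*u+1) + 1)"
definition "lam = - 3 * (2*u+1) + (3*u-1)^2 + 3 * (3*u-1)"
definition "mu = (3*u-1)^2 + (3*u-1)"

lemma cardD': "int (card D) = kk" using cardD unfolding kk_def by simp

lemma pds': "x \<in> carrier G - {\<one>} \<Longrightarrow> int (card (cset G D x)) = (if x \<in> D then lam else mu)"
  using pds unfolding lam_def mu_def by simp

lemma lam_mu: "lam - mu = -5" unfolding lam_def mu_def by (simp add: algebra_simps)

definition fib :: "'a \<Rightarrow> ('a \<times> 'a) set" where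
  "fib x = {(a, b). a \<in> D \<and> b \<in> D \<and> a \<otimes> inv b = x}"

lemma finD: "finite D" using fin Dsub finite_subset by blast

lemma fib_fin: "finite (fib x)"
proof -
  have "fib x \<subseteq> D \<times> D" unfolding fib_def by auto
  then show ?thesis using finD finite_subset by blast
qed

lemma fib_one: "card (fib \<one>) = card D"
proof -
  have "fib \<one> = (\<lambda>a. (a, a)) ` D"
  proof
    show "fib \<one> \<subseteq> (\<lambda>a. (a, a)) ` D"
    proof
      fix z assume z: "z \<in> fib \<one>"
      then obtain a b where ab: "z = (a, b)" "a \<in> D" "b \<in> D" "a \<otimes> inv b = \<one>"
        unfolding fib_def by auto
      then have "a = b" using Dsub inv_solve_right'[of \<one> a b] by auto
      then show "z \<in> (\<lambda>a. (a, a)) ` D" using ab by auto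
    qed
    show "(\<lambda>a. (a, a)) ` D \<subseteq> fib \<one>"
      unfolding fib_def using Dsub by (auto simp: r_inv)
  qed
  then show ?thesis by (simp add: card_image inj_on_def)
qed

lemma fib_ne: "x \<noteq> \<one> \<Longrightarrow> fib x = cset G D x"
  unfolding fib_def cset_def using Dsub by (auto simp: r_inv)

definition pairs_in :: "'a set \<Rightarrow> ('a \<times> 'a) set" where
  "pairs_in Sx = {(a, b). a \<in> D \<and> b \<in> D \<and> a \<otimes> inv b \<in> Sx}"

lemma card_pairs_in:
  assumes "Sx \<subseteq> carrier G"
  shows "card (pairs_in Sx) = (\<Sum>x\<in>Sx. card (fib x))"
proof -
  have finX: "finite Sx" using assms fin finite_subset by blast
  have "pairs_in Sx = (\<Union>x\<in>Sx. fib x)"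
    unfolding pairs_in_def fib_def by auto
  moreover have "card (\<Union>x\<in>Sx. fib x) = (\<Sum>x\<in>Sx. card (fib x))"
    by (rule card_UN_disjoint) (use finX fib_fin in \<open>auto simp: fib_def\<close>)
  ultimately show ?thesis by simp
qed

lemma sum_cset:
  assumes "Y \<subseteq> carrier G - {\<one>}"
  shows "(\<Sum>x\<in>Y. int (card (cset G D x))) = lam * int (card (D \<inter> Y)) + mu * int (card (Y - D))"
proof -
  have finY: "finite Y" using assms fin finite_subset by blast
  have "(\<Sum>x\<in>Y. int (card (cset G D x))) = (\<Sum>x\<in>Y. if x \<in> D then lam else mu)"
  proof (rule sum.cong[OF refl])
    fix x assume "x \<in> Y"
    then have "x \<in> carrier G - {\<one>}" using assms by blast
    then show "int (card (cset G D x)) = (if x \<in> D then lam else mu)" by (rule pds')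
  qed
  also have "\<dots> = (\<Sum>x\<in>Y \<inter> D. lam) + (\<Sum>x\<in>Y - D. mu)"
    using finY by (simp add: sum.If_cases Int_commute Diff_eq)
  also have "\<dots> = lam * int (card (D \<inter> Y)) + mu * int (card (Y - D))"
    by (simp add: Int_commute)
  finally show ?thesis .
qed

lemma one_notin: "\<one> \<notin> D"
proof
  assume oD: "\<one> \<in> D"
  have "pairs_in (carrier G) = D \<times> D"
    unfolding pairs_in_def using Dsub by auto
  then have "card (D \<times> D) = (\<Sum>x\<in>carrier G. card (fib x))"
    using card_pairs_in[of "carrier G"] by simp
  also have "\<dots> = card (fib \<one>) + (\<Sum>x\<in>carrier G - {\<one>}. card (fib x))"
    using fin by (simp add: sum.remove[of "carrier G" "\<one>"])
  also have "(\<Sum>x\<in>carrier G - {\<one>}. card (fib x)) = (\<Sum>x\<in>carrier G - {\<one>}. card (cset G D x))"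
    by (rule sum.cong) (auto simp: fib_ne)
  finally have eq0: "card D * card D = card D + (\<Sum>x\<in>carrier G - {\<one>}. card (cset G D x))"
    by (simp add: card_cartesian_product fib_one)
  then have "int (card D * card D) = int (card D + (\<Sum>x\<in>carrier G - {\<one>}. card (cset G D x)))"
    by simp
  then have eq: "int (card D) * int (card D) = int (card D) + (\<Sum>x\<in>carrier G - {\<one>}. int (card (cset G D x)))"
    by (simp only: of_nat_mult of_nat_add of_nat_sum)
  have c1: "card (D \<inter> (carrier G - {\<one>})) = card D - 1"
  proof -
    have "D \<inter> (carrier G - {\<one>}) = D - {\<one>}" using Dsub by auto
    then show ?thesis using oD finD by simp
  qed
  have c2: "card ((carrier G - {\<one>}) - D) = 9 * M - card D"
  proof -
    have "(carrier G - {\<one>}) - D = carrier G - D" using oD by auto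
    then show ?thesis using cardG Dsub fin by (simp add: card_Diff_subset finite_subset)
  qed
  have Dpos: "card D \<ge> 1" using oD finD by (auto simp: Suc_le_eq card_gt_0_iff)
  have DleG: "card D \<le> 9 * M" using card_mono[OF fin Dsub] cardG by simp
  from eq sum_cset[of "carrier G - {\<one>}"] c1 c2 Dpos DleG
  have "int (card D) * int (card D) = int (card D) + lam * (int (card D) - 1) + mu * (9 * int M - int (card D))"
    by (simp add: of_nat_diff)
  then have "kk * kk = kk + lam * (kk - 1) + mu * (9 * (2*u+1)^2 - kk)"
    using cardD' MN by simp
  moreover have "kk * kk - (kk + lam * (kk - 1) + mu * (9 * (2*u+1)^2 - kk)) = -5"
    unfolding kk_def lam_def mu_def by (simp add: algebra_simps power2_eq_square)
  ultimately show False by simp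
qed

lemma inv_closed_D:
  assumes "x \<in> D" shows "inv x \<in> D"
proof -
  have xc: "x \<in> carrier G" using assms Dsub by auto
  have x1: "x \<noteq> \<one>" using assms one_notin by auto
  have ix1: "inv x \<noteq> \<one>" using x1 by (metis inv_inv[OF xc] inv_one)
  have "cset G D (inv x) = (\<lambda>(a, b). (b, a)) ` cset G D x"
  proof
    show "cset G D (inv x) \<subseteq> (\<lambda>(a, b). (b, a)) ` cset G D x"
    proof
      fix z assume "z \<in> cset G D (inv x)"
      then obtain a b where ab: "z = (a, b)" "a \<in> D" "b \<in> D" "a \<noteq> b" "a \<otimes> inv b = inv x"
        unfolding cset_def by auto
      have ac: "a \<in> carrier G" and bc: "b \<in> carrier G" using ab Dsub by auto
      have "b \<otimes> inv a = inv (a \<otimes> inv b)" using ac bc by (simp add: inv_mult_group)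
      then have "b \<otimes> inv a = x" using ab xc by simp
      then have "(b, a) \<in> cset G D x" using ab unfolding cset_def by auto
      then show "z \<in> (\<lambda>(a, b). (b, a)) ` cset G D x" using ab by force
    qed
    show "(\<lambda>(a, b). (b, a)) ` cset G D x \<subseteq> cset G D (inv x)"
    proof
      fix z assume "z \<in> (\<lambda>(a, b). (b, a)) ` cset G D x"
      then obtain a b where ab: "z = (b, a)" "a \<in> D" "b \<in> D" "a \<noteq> b" "a \<otimes> inv b = x"
        unfolding cset_def by auto
      have ac: "a \<in> carrier G" and bc: "b \<in> carrier G" using ab Dsub by auto
      have "b \<otimes> inv a = inv (a \<otimes> inv b)" using ac bc by (simp add: inv_mult_group)
      then show "z \<in> cset G D (inv x)" using ab unfolding cset_def by auto
    qed
  qed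
  moreover have "inj_on (\<lambda>(a, b). (b, a)) (cset G D x)" by (auto simp: inj_on_def)
  ultimately have "card (cset G D (inv x)) = card (cset G D x)" by (simp add: card_image)
  then have "(if inv x \<in> D then lam else mu) = lam"
    using pds'[of x] pds'[of "inv x"] assms xc x1 ix1 by simp
  moreover have "lam \<noteq> mu" using lam_mu by auto
  ultimately show ?thesis by (cases "inv x \<in> D") auto
qed

end

fun abc :: "int \<Rightarrow> int \<Rightarrow> int \<Rightarrow> int \<Rightarrow> nat \<Rightarrow> int \<times> int \<times> int" where
  "abc al be m k 0 = (1, 0, 0)"
| "abc al be m k (Suc j) = (let t = abc al be m k j in
     (fst (snd t) * al, fst t + fst (snd t) * be, fst (snd t) * m + snd (snd t) * k))"

lemma abc_root:
  assumes "al = - (th * ta)" "be = th + ta"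
  shows "th ^ j = fst (snd (abc al be m k j)) * th + fst (abc al be m k j)
       \<and> ta ^ j = fst (snd (abc al be m k j)) * ta + fst (abc al be m k j)"
proof (induction j)
  case 0 then show ?case by simp
next
  case (Suc j)
  define a where "a = fst (abc al be m k j)"
  define b where "b = fst (snd (abc al be m k j))"
  have h1: "th ^ j = b * th + a" and h2: "ta ^ j = b * ta + a" using Suc unfolding a_def b_def by auto
  have "th ^ Suc j = th * (b * th + a)" using h1 by simp
  also have "\<dots> = b * al + (a + b * be) * th" using assms by (simp add: algebra_simps power2_eq_square)
  finally have e1: "th ^ Suc j = b * al + (a + b * be) * th" .
  have "ta ^ Suc j = ta * (b * ta + a)" using h2 by simp
  also have "\<dots> = b * al + (a + b * be) * ta" using assms by (simp add: algebra_simps power2_eq_square)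
  finally have e2: "ta ^ Suc j = b * al + (a + b * be) * ta" .
  show ?case using e1 e2 unfolding a_def b_def by (simp add: Let_def algebra_simps)
qed

context pdsl
begin

definition prodl :: "'a list \<Rightarrow> 'a" where
  "prodl l = foldr (\<otimes>) l \<one>"

lemma prodl_Nil [simp]: "prodl [] = \<one>" unfolding prodl_def by simp
lemma prodl_Cons [simp]: "prodl (a # l) = a \<otimes> prodl l" unfolding prodl_def by simp

lemma prodl_closed: "set l \<subseteq> carrier G \<Longrightarrow> prodl l \<in> carrier G"
  by (induction l) auto

lemma prodl_append: "set l1 \<subseteq> carrier G \<Longrightarrow> set l2 \<subseteq> carrier G \<Longrightarrow> prodl (l1 @ l2) = prodl l1 \<otimes> prodl l2"
  by (induction l1) (auto simp: m_assoc prodl_closed)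

lemma prodl_rotate1: "set l \<subseteq> carrier G \<Longrightarrow> prodl (rotate1 l) = prodl l"
proof (cases l)
  case Nil then show ?thesis by simp
next
  case (Cons a l')
  assume "set l \<subseteq> carrier G"
  then have a: "a \<in> carrier G" and l': "set l' \<subseteq> carrier G" using Cons by auto
  have "prodl (rotate1 l) = prodl l' \<otimes> prodl [a]" using Cons prodl_append[OF l'] a by simp
  also have "\<dots> = a \<otimes> prodl l'" using a prodl_closed[OF l'] by (simp add: m_comm)
  finally show ?thesis using Cons by simp
qed

lemma prodl_replicate: "a \<in> carrier G \<Longrightarrow> prodl (replicate n a) = a [^] n"
proof (induction n)
  case 0 then show ?case by simp
next
  case (Suc n)
  then show ?case by (simp add: m_comm nat_pow_closed)
qed

definition Tset :: "nat \<Rightarrow> 'a \<Rightarrow> 'a list set" where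
  "Tset j x = {l. set l \<subseteq> D \<and> length l = j \<and> prodl l = x}"

lemma Tset_fin: "finite (Tset j x)"
proof -
  have "Tset j x \<subseteq> {l. set l \<subseteq> D \<and> length l = j}" unfolding Tset_def by auto
  then show ?thesis using finite_lists_length_eq[OF finD] finite_subset by blast
qed

lemma Tset_Suc:
  assumes x: "x \<in> carrier G"
  shows "Tset (Suc j) x = (\<Union>a\<in>D. (Cons a) ` Tset j (inv a \<otimes> x))"
proof
  show "Tset (Suc j) x \<subseteq> (\<Union>a\<in>D. (Cons a) ` Tset j (inv a \<otimes> x))"
  proof
    fix l assume l: "l \<in> Tset (Suc j) x"
    then obtain a l' where al: "l = a # l'" unfolding Tset_def by (cases l) auto
    have aD: "a \<in> D" and l'D: "set l' \<subseteq> D" and len: "length l' = j" and pr: "a \<otimes> prodl l' = x"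
      using l al unfolding Tset_def by auto
    have ac: "a \<in> carrier G" using aD Dsub by auto
    have pc: "prodl l' \<in> carrier G" using l'D Dsub prodl_closed by blast
    have "prodl l' = inv a \<otimes> x" using inv_solve_left[OF pc ac x] pr by simp
    then have "l' \<in> Tset j (inv a \<otimes> x)" unfolding Tset_def using l'D len by auto
    then show "l \<in> (\<Union>a\<in>D. (Cons a) ` Tset j (inv a \<otimes> x))" using al aD by blast
  qed
  show "(\<Union>a\<in>D. (Cons a) ` Tset j (inv a \<otimes> x)) \<subseteq> Tset (Suc j) x"
  proof
    fix l assume "l \<in> (\<Union>a\<in>D. (Cons a) ` Tset j (inv a \<otimes> x))"
    then obtain a l' where al: "l = a # l'" "a \<in> D" "l' \<in> Tset j (inv a \<otimes> x)" by blast
    have ac: "a \<in> carrier G" using al Dsub by auto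
    have "prodl l = a \<otimes> (inv a \<otimes> x)" using al unfolding Tset_def by simp
    also have "\<dots> = x" using ac x by (simp add: m_assoc[symmetric])
    finally show "l \<in> Tset (Suc j) x" using al unfolding Tset_def by auto
  qed
qed

lemma T_Suc:
  assumes x: "x \<in> carrier G"
  shows "card (Tset (Suc j) x) = (\<Sum>a\<in>D. card (Tset j (inv a \<otimes> x)))"
proof -
  have "card (\<Union>a\<in>D. (Cons a) ` Tset j (inv a \<otimes> x)) = (\<Sum>a\<in>D. card ((Cons a) ` Tset j (inv a \<otimes> x)))"
    by (rule card_UN_disjoint) (use finD Tset_fin in auto)
  also have "\<dots> = (\<Sum>a\<in>D. card (Tset j (inv a \<otimes> x)))"
    by (rule sum.cong) (auto simp: card_image)
  finally show ?thesis using Tset_Suc[OF x] by simp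
qed

lemma PP:
  assumes x: "x \<in> carrier G"
  shows "int (card {a\<in>D. inv a \<otimes> x \<in> D}) =
     (kk - mu) * (if x = \<one> then 1 else 0) + (lam - mu) * (if x \<in> D then 1 else 0) + mu"
proof (cases "x = \<one>")
  case True
  have "{a\<in>D. inv a \<otimes> x \<in> D} = D" using True inv_closed_D Dsub by auto
  then show ?thesis using True one_notin cardD' by simp
next
  case False
  define f where "f a = (inv a \<otimes> x, inv a)" for a
  have "f ` {a\<in>D. inv a \<otimes> x \<in> D} = cset G D x"
  proof
    show "f ` {a\<in>D. inv a \<otimes> x \<in> D} \<subseteq> cset G D x"
    proof
      fix z assume "z \<in> f ` {a\<in>D. inv a \<otimes> x \<in> D}"
      then obtain a where a: "a \<in> D" "inv a \<otimes> x \<in> D" "z = f a" by blast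
      have ac: "a \<in> carrier G" using a Dsub by auto
      have "(inv a \<otimes> x) \<otimes> inv (inv a) = x" using ac x
        by (simp add: m_assoc m_comm[of x a] m_assoc[symmetric])
      moreover have "inv a \<otimes> x \<noteq> inv a" using False ac x by simp
      ultimately show "z \<in> cset G D x" using a inv_closed_D unfolding cset_def f_def by auto
    qed
    show "cset G D x \<subseteq> f ` {a\<in>D. inv a \<otimes> x \<in> D}"
    proof
      fix z assume "z \<in> cset G D x"
      then obtain g h where gh: "z = (g, h)" "g \<in> D" "h \<in> D" "g \<otimes> inv h = x" unfolding cset_def by auto
      have gc: "g \<in> carrier G" and hc: "h \<in> carrier G" using gh Dsub by auto
      have ih: "inv h \<in> D" using inv_closed_D gh by simp
      have "h \<otimes> x = h \<otimes> (g \<otimes> inv h)" using gh by simp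
      also have "\<dots> = g \<otimes> (h \<otimes> inv h)" using gc hc by (simp add: m_lcomm)
      also have "\<dots> = g" using gc hc by simp
      finally have "inv (inv h) \<otimes> x = g" using hc by simp
      then have "f (inv h) = z" unfolding f_def using gh hc by simp
      moreover have "inv h \<in> {a\<in>D. inv a \<otimes> x \<in> D}" using ih \<open>inv (inv h) \<otimes> x = g\<close> gh by simp
      ultimately show "z \<in> f ` {a\<in>D. inv a \<otimes> x \<in> D}" by blast
    qed
  qed
  moreover have "inj_on f {a\<in>D. inv a \<otimes> x \<in> D}"
  proof (rule inj_onI)
    fix a b assume "a \<in> {a\<in>D. inv a \<otimes> x \<in> D}" "b \<in> {a\<in>D. inv a \<otimes> x \<in> D}" "f a = f b"
    then have ab: "a \<in> carrier G" "b \<in> carrier G" "inv a = inv b" unfolding f_def using Dsub by auto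
    then show "a = b" by (metis inv_inv)
  qed
  ultimately have "card {a\<in>D. inv a \<otimes> x \<in> D} = card (cset G D x)" using card_image by fastforce
  then show ?thesis using pds'[of x] False x by simp
qed

end

context pdsl
begin
abbreviation "AA j \<equiv> fst (abc (kk - mu) (lam - mu) mu kk j)"
abbreviation "BB j \<equiv> fst (snd (abc (kk - mu) (lam - mu) mu kk j))"
abbreviation "CC j \<equiv> snd (snd (abc (kk - mu) (lam - mu) mu kk j))"

lemma sum_ind: "(\<Sum>a\<in>A. if P a then 1 else 0 :: int) = int (card {a\<in>A. P a})" if "finite A" for A P
  using that by (simp add: sum.If_cases Int_def)

lemma ring_aux: "(T::int) = a*iD + b*(al*i1 + be*iD + m) + c*k \<Longrightarrow> T = (b*al)*i1 + (a + b*be)*iD + (b*m + c*k)"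
  by (simp add: algebra_simps)

lemma T_closed:
  assumes x: "x \<in> carrier G"
  shows "int (card (Tset j x)) = AA j * (if x = \<one> then 1 else 0) + BB j * (if x \<in> D then 1 else 0) + CC j"
  using x
proof (induction j arbitrary: x)
  case 0
  have "Tset 0 x = (if x = \<one> then {[]} else {})" unfolding Tset_def by auto
  then show ?case using one_notin by auto
next
  case (Suc j)
  have ic: "inv a \<otimes> x \<in> carrier G" if "a \<in> D" for a using that Dsub Suc.prems by auto
  have "int (card (Tset (Suc j) x)) = (\<Sum>a\<in>D. int (card (Tset j (inv a \<otimes> x))))"
    using T_Suc[OF Suc.prems] by simp
  also have "\<dots> = (\<Sum>a\<in>D. AA j * (if inv a \<otimes> x = \<one> then 1 else 0) + BB j * (if inv a \<otimes> x \<in> D then 1 else 0) + CC j)"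
  proof (rule sum.cong[OF refl])
    fix a assume "a \<in> D"
    then show "int (card (Tset j (inv a \<otimes> x))) = AA j * (if inv a \<otimes> x = \<one> then 1 else 0) + BB j * (if inv a \<otimes> x \<in> D then 1 else 0) + CC j"
      using Suc.IH[OF ic] by blast
  qed
  also have "\<dots> = AA j * (\<Sum>a\<in>D. if inv a \<otimes> x = \<one> then 1 else 0) + BB j * (\<Sum>a\<in>D. if inv a \<otimes> x \<in> D then 1 else 0) + CC j * kk"
    using cardD' by (simp add: sum.distrib sum_distrib_left)
  also have "(\<Sum>a\<in>D. if inv a \<otimes> x = \<one> then 1 else 0 :: int) = (\<Sum>a\<in>D. if a = x then 1 else 0)"
  proof (rule sum.cong[OF refl])
    fix a assume "a \<in> D"
    then have ac: "a \<in> carrier G" using Dsub by auto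
    have "inv a \<otimes> x = \<one> \<longleftrightarrow> x = a \<otimes> \<one>" using inv_solve_left'[OF one_closed ac Suc.prems] .
    then show "(if inv a \<otimes> x = \<one> then 1 else 0 :: int) = (if a = x then 1 else 0)" using ac by auto
  qed
  also have "\<dots> = (if x \<in> D then 1 else 0)" using finD by (simp add: sum.delta')
  also have "(\<Sum>a\<in>D. if inv a \<otimes> x \<in> D then 1 else 0 :: int) = int (card {a\<in>D. inv a \<otimes> x \<in> D})"
    by (rule sum_ind[OF finD])
  also have "\<dots> = (kk - mu) * (if x = \<one> then 1 else 0) + (lam - mu) * (if x \<in> D then 1 else 0) + mu"
    using PP[OF Suc.prems] .
  finally have calc: "int (card (Tset (Suc j) x)) = AA j * (if x \<in> D then 1 else 0) + BB j * ((kk - mu) * (if x = \<one> then 1 else 0) + (lam - mu) * (if x \<in> D then 1 else 0) + mu) + CC j * kk" .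
  moreover have eqs: "AA (Suc j) = BB j * (kk - mu)" "BB (Suc j) = AA j + BB j * (lam - mu)" "CC (Suc j) = BB j * mu + CC j * kk"
    by (simp_all add: Let_def)
  show ?case unfolding eqs by (rule ring_aux[OF calc])
qed

lemma T_sum: "(\<Sum>x\<in>carrier G. card (Tset j x)) = card D ^ j"
proof -
  have "(\<Union>x\<in>carrier G. Tset j x) = {l. set l \<subseteq> D \<and> length l = j}"
    unfolding Tset_def using Dsub prodl_closed by auto
  moreover have "card (\<Union>x\<in>carrier G. Tset j x) = (\<Sum>x\<in>carrier G. card (Tset j x))"
    by (rule card_UN_disjoint) (use fin Tset_fin in \<open>auto simp: Tset_def\<close>)
  ultimately show ?thesis using card_lists_length_eq[OF finD] by simp
qed

lemma T_sum_int: "AA j + BB j * kk + CC j * (9 * int M) = kk ^ j"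
proof -
  have "(\<Sum>x\<in>carrier G. int (card (Tset j x))) = int (\<Sum>x\<in>carrier G. card (Tset j x))"
    by (simp only: of_nat_sum)
  also have "\<dots> = int (card D) ^ j" using T_sum[of j] by simp
  finally have "(\<Sum>x\<in>carrier G. int (card (Tset j x))) = int (card D) ^ j" .
  also have "(\<Sum>x\<in>carrier G. int (card (Tset j x))) =
      (\<Sum>x\<in>carrier G. AA j * (if x = \<one> then 1 else 0) + BB j * (if x \<in> D then 1 else 0) + CC j)"
    by (rule sum.cong) (auto simp: T_closed)
  also have "\<dots> = AA j * (\<Sum>x\<in>carrier G. if x = \<one> then 1 else 0) + BB j * (\<Sum>x\<in>carrier G. if x \<in> D then 1 else 0) + CC j * int (card (carrier G))"
    by (simp add: sum.distrib sum_distrib_left)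
  also have "(\<Sum>x\<in>carrier G. if x = \<one> then 1 else 0 :: int) = 1" using fin by simp
  also have "(\<Sum>x\<in>carrier G. if x \<in> D then 1 else 0 :: int) = int (card D)"
  proof -
    have "{x\<in>carrier G. x \<in> D} = D" using Dsub by auto
    then show ?thesis using sum_ind[OF fin, of "\<lambda>x. x \<in> D"] by simp
  qed
  finally show ?thesis using cardD' cardG by simp
qed

lemma T_rot:
  assumes q: "Factorial_Ring.prime q"
  shows "int q dvd int (card (Tset q x)) - int (card {a\<in>D. a [^] q = x})"
proof -
  have qpos: "q > 0" using q prime_gt_0_nat by blast
  have "q dvd card {l\<in>Tset q x. \<not> const_list l}"
  proof (rule rotation_dvd[OF q Tset_fin])
    show "length l = q" if "l \<in> Tset q x" for l using that unfolding Tset_def by auto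
    show "rotate1 l \<in> Tset q x" if "l \<in> Tset q x" for l
      using that prodl_rotate1 Dsub unfolding Tset_def by auto
  qed
  moreover have "card {l\<in>Tset q x. const_list l} = card {a\<in>D. a [^] q = x}"
  proof -
    have "{l\<in>Tset q x. const_list l} = (\<lambda>a. replicate q a) ` {a\<in>D. a [^] q = x}"
    proof
      show "{l\<in>Tset q x. const_list l} \<subseteq> (\<lambda>a. replicate q a) ` {a\<in>D. a [^] q = x}"
      proof
        fix l assume l: "l \<in> {l\<in>Tset q x. const_list l}"
        then have len: "length l = q" and sl: "set l \<subseteq> D" and pl: "prodl l = x" and cl: "const_list l"
          unfolding Tset_def by auto
        have hl: "hd l \<in> set l" using len qpos by (cases l) auto
        have "\<forall>y\<in>set l. y = hd l" using cl hl unfolding const_list_def by blast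
        then have lr: "l = replicate q (hd l)" using replicate_length_same len by metis
        have hD: "hd l \<in> D" using hl sl by auto
        have hc: "hd l \<in> carrier G" using hD Dsub by auto
        have "x = prodl (replicate q (hd l))" using pl lr by simp
        then have "hd l [^] q = x" using prodl_replicate[OF hc] by simp
        then show "l \<in> (\<lambda>a. replicate q a) ` {a\<in>D. a [^] q = x}" using lr hD by blast
      qed
      show "(\<lambda>a. replicate q a) ` {a\<in>D. a [^] q = x} \<subseteq> {l\<in>Tset q x. const_list l}"
        unfolding Tset_def const_list_def using prodl_replicate Dsub by auto
    qed
    moreover have "inj_on (\<lambda>a. replicate q a) {a\<in>D. a [^] q = x}"
      using qpos by (auto simp: inj_on_def replicate_eq_replicate)
    ultimately show ?thesis by (simp add: card_image)
  qed
  moreover have "card (Tset q x) = card {l\<in>Tset q x. const_list l} + card {l\<in>Tset q x. \<not> const_list l}"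
  proof -
    have e: "Tset q x = {l\<in>Tset q x. const_list l} \<union> {l\<in>Tset q x. \<not> const_list l}" by auto
    have "card ({l\<in>Tset q x. const_list l} \<union> {l\<in>Tset q x. \<not> const_list l}) =
        card {l\<in>Tset q x. const_list l} + card {l\<in>Tset q x. \<not> const_list l}"
      by (rule card_Un_disjoint) (use Tset_fin in auto)
    then show ?thesis using e by simp
  qed
  ultimately have "int (card (Tset q x)) - int (card {a\<in>D. a [^] q = x}) = int (card {l\<in>Tset q x. \<not> const_list l})"
    and "q dvd card {l\<in>Tset q x. \<not> const_list l}" by simp_all
  then show ?thesis by simp
qed

end

context pdsl
begin

lemma order_G: "order G = 9 * M" unfolding order_def using cardG by simp

lemma pow_inj:
  assumes t: "coprime t (9 * M)" and a: "a \<in> carrier G" and b: "b \<in> carrier G"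
    and eq: "a [^] t = b [^] t"
  shows "a = b"
proof -
  define c where "c = a \<otimes> inv b"
  have cc: "c \<in> carrier G" unfolding c_def using a b by simp
  have "c [^] t = a [^] t \<otimes> inv (b [^] t)"
    unfolding c_def using a b by (simp add: nat_pow_distrib nat_pow_inv)
  also have "\<dots> = \<one>" using eq b by simp
  finally have "ord c dvd t" using pow_eq_id[OF cc] by simp
  moreover have "ord c dvd 9 * M" using ord_dvd_group_order[OF cc] order_G by simp
  ultimately have "ord c dvd gcd t (9 * M)" by simp
  moreover have "gcd t (9 * M) = 1" using t[unfolded coprime_iff_gcd_eq_1] .
  ultimately have "ord c dvd 1" by simp
  then have "c [^] (1::nat) = \<one>" by (rule iffD2[OF pow_eq_id[OF cc]])
  then have "c = \<one>" using nat_pow_eone[OF cc] by metis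
  then show ?thesis unfolding c_def using a b inv_solve_right'[of \<one> a b] by simp
qed

lemma card_pow_fiber:
  assumes t: "coprime t (9 * M)" and a: "a \<in> carrier G"
  shows "card {b\<in>D. b [^] t = a [^] t} = (if a \<in> D then 1 else 0)"
proof -
  have "{b\<in>D. b [^] t = a [^] t} = (if a \<in> D then {a} else {})"
    using pow_inj[OF t] a Dsub by auto
  then show ?thesis by simp
qed

lemma th_ta1: "kk - mu = - ((3*u - 1) * (-3*u - 4))"
  unfolding kk_def mu_def by (simp add: algebra_simps power2_eq_square)

lemma th_ta2: "lam - mu = (3*u - 1) + (-3*u - 4)"
  unfolding lam_def mu_def by (simp add: algebra_simps power2_eq_square)

lemma mult_prime:
  assumes q: "Factorial_Ring.prime q" and nq: "\<not> q dvd 9 * M" and a: "a \<in> carrier G"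
  shows "a \<in> D \<longleftrightarrow> a [^] q \<in> D"
proof -
  define th where "th = 3*u - 1"
  define ta where "ta = -3*u - 4"
  define A where "A = AA q"
  define B where "B = BB q"
  define C where "C = CC q"
  define qi where "qi = int q"
  have qip: "Factorial_Ring.prime qi" unfolding qi_def using q by simp
  have roots: "th ^ q = B * th + A" "ta ^ q = B * ta + A"
    using abc_root[OF th_ta1 th_ta2, of q mu kk] unfolding th_def ta_def A_def B_def by auto
  have f1: "qi dvd th ^ q - th" using fermat_int[OF q, of th] unfolding qi_def by (simp add: cong_iff_dvd_diff)
  have f2: "qi dvd ta ^ q - ta" using fermat_int[OF q, of ta] unfolding qi_def by (simp add: cong_iff_dvd_diff)
  have "(th - ta) * (B - 1) = (th ^ q - th) - (ta ^ q - ta)" using roots by (simp add: algebra_simps)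
  then have d1: "qi dvd (th - ta) * (B - 1)" using f1 f2 by simp
  have ndt: "\<not> qi dvd (th - ta)"
  proof
    assume "qi dvd (th - ta)"
    then have "qi dvd (th - ta) * (th - ta)" by simp
    moreover have "(th - ta) * (th - ta) = int (9 * M)"
      unfolding th_def ta_def using MN by (simp add: algebra_simps power2_eq_square)
    ultimately have "qi dvd int (9 * M)" by simp
    then show False using nq unfolding qi_def by (simp only: int_dvd_int_iff)
  qed
  have dB: "qi dvd B - 1" using d1 ndt qip prime_dvd_mult_iff by blast
  have "A = (th ^ q - th) - (B - 1) * th" using roots by (simp add: algebra_simps)
  then have dA: "qi dvd A" using f1 dB by simp
  have sumq: "A + B * kk + C * (9 * int M) = kk ^ q" using T_sum_int[of q] unfolding A_def B_def C_def .
  have fk: "qi dvd kk ^ q - kk" using fermat_int[OF q, of kk] unfolding qi_def by (simp add: cong_iff_dvd_diff)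
  have "C * (9 * int M) = (kk ^ q - kk) - A - (B - 1) * kk" using sumq by (simp add: algebra_simps)
  then have "qi dvd C * (9 * int M)" using fk dA dB by simp
  moreover have "\<not> qi dvd 9 * int M" using nq unfolding qi_def
    by (metis int_dvd_int_iff of_nat_mult of_nat_numeral)
  ultimately have dC: "qi dvd C" using qip prime_dvd_mult_iff by blast
  define y where "y = a [^] q"
  have yc: "y \<in> carrier G" unfolding y_def using a by simp
  have Ty: "int (card (Tset q y)) = A * (if y = \<one> then 1 else 0) + B * (if y \<in> D then 1 else 0) + C"
    using T_closed[OF yc] unfolding A_def B_def C_def .
  have "int (card (Tset q y)) - (if y \<in> D then 1 else 0) = A * (if y = \<one> then 1 else 0) + (B - 1) * (if y \<in> D then 1 else 0) + C"
    using Ty by (simp add: algebra_simps)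
  then have d2: "qi dvd int (card (Tset q y)) - (if y \<in> D then 1 else 0)" using dA dB dC by simp
  have cop: "coprime q (9 * M)" using q nq prime_imp_coprime by blast
  have "int (card {b\<in>D. b [^] q = y}) = (if a \<in> D then 1 else 0)"
    using card_pow_fiber[OF cop a] unfolding y_def by simp
  then have d3: "qi dvd int (card (Tset q y)) - (if a \<in> D then 1 else 0)"
    using T_rot[OF q, of y] unfolding qi_def by simp
  have "qi dvd (if a \<in> D then 1 else 0) - (if y \<in> D then 1 else 0)"
    using dvd_diff[OF d2 d3] by simp
  moreover have "qi \<ge> 2" unfolding qi_def using q prime_ge_2_nat by simp
  ultimately show ?thesis unfolding y_def
    by (cases "a \<in> D"; cases "a [^] q \<in> D") (auto simp: zdvd_not_zless)
qed

lemma mult_coprime: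
  assumes "coprime t (9 * M)" and "a \<in> carrier G"
  shows "a \<in> D \<longleftrightarrow> a [^] t \<in> D"
  using assms
proof (induction t arbitrary: a rule: less_induct)
  case (less t)
  show ?case
  proof (cases "t = 1")
    case True then show ?thesis using less.prems(2) by simp
  next
    case False
    have t0: "t \<noteq> 0"
    proof
      assume "t = 0"
      then have "9 * M = 1" using less.prems(1) by simp
      then show False by simp
    qed
    obtain q where q: "Factorial_Ring.prime q" "q dvd t" using prime_factor_nat[OF False] by blast
    then obtain t' where t': "t = q * t'" by blast
    have nq: "\<not> q dvd 9 * M"
    proof
      assume "q dvd 9 * M"
      then have "q dvd gcd t (9 * M)" using q(2) by (rule gcd_greatest[rotated])
      moreover have "gcd t (9 * M) = 1" using less.prems(1)[unfolded coprime_iff_gcd_eq_1] .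
      ultimately have "q = 1" by simp
      then show False using q(1) by simp
    qed
    have t'lt: "t' < t" using t' t0 q prime_gt_1_nat by (cases "t' = 0") auto
    have cop': "coprime t' (9 * M)" using less.prems(1) t' by simp
    have "a \<in> D \<longleftrightarrow> a [^] t' \<in> D" using less.IH[OF t'lt cop' less.prems(2)] .
    also have "\<dots> \<longleftrightarrow> (a [^] t') [^] q \<in> D" using mult_prime[OF q(1) nq] less.prems(2) by simp
    also have "(a [^] t') [^] q = a [^] t" using t' less.prems(2) by (simp add: nat_pow_pow mult.commute)
    finally show ?thesis .
  qed
qed

lemma mod3:
  assumes y: "y \<in> carrier G"
  shows "3 dvd int (card {a\<in>D. a [^] (3::nat) = y}) - 2 * (if y = \<one> then 1 else 0)"
proof -
  have p3: "Factorial_Ring.prime (3::nat)" by simp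
  have e3: "abc al be m k 3 = (al * be, al + be * be, be * m + m * k)" for al be m k
    by (simp add: numeral_3_eq_3 Let_def algebra_simps)
  have A3: "AA 3 = (kk - mu) * (lam - mu)" and B3: "BB 3 = (kk - mu) + (lam - mu) * (lam - mu)"
    and C3: "CC 3 = (lam - mu) * mu + mu * kk" using e3 by simp_all
  have dA: "3 dvd AA 3 - 2"
  proof -
    have "(kk - mu) * (lam - mu) - 2 = 3 * (-15*u^2 - 15*u + 6)" unfolding kk_def mu_def lam_def
      by (simp add: algebra_simps power2_eq_square)
    then show ?thesis using A3 by simp
  qed
  have dB: "3 dvd BB 3"
  proof -
    have "(kk - mu) + (lam - mu) * (lam - mu) = 3 * (3*u^2 + 3*u + 7)" unfolding kk_def mu_def lam_def
      by (simp add: algebra_simps power2_eq_square)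
    then show ?thesis using B3 by simp
  qed
  have dC: "3 dvd CC 3"
  proof -
    have "(lam - mu) * mu + mu * kk = 3 * ((u * (3*u - 1)) * (lam - mu + kk))" unfolding mu_def
      by (simp add: algebra_simps power2_eq_square)
    then show ?thesis using C3 by simp
  qed
  have "int (card (Tset 3 y)) - 2 * (if y = \<one> then 1 else 0) =
      (AA 3 - 2) * (if y = \<one> then 1 else 0) + BB 3 * (if y \<in> D then 1 else 0) + CC 3"
    using T_closed[OF y, of 3] by (simp add: algebra_simps)
  then have "3 dvd int (card (Tset 3 y)) - 2 * (if y = \<one> then 1 else 0)"
    using dA dB dC by simp
  moreover have "3 dvd int (card (Tset 3 y)) - int (card {a\<in>D. a [^] (3::nat) = y})"
    using T_rot[OF p3, of y] by simp
  ultimately have "3 dvd (int (card (Tset 3 y)) - 2 * (if y = \<one> then 1 else 0)) - (int (card (Tset 3 y)) - int (card {a\<in>D. a [^] (3::nat) = y}))"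
    by (rule dvd_diff)
  then show ?thesis by simp
qed

end

context pdsl
begin

lemma M_gt1: "M > 1"
proof -
  have "p > 1" using p5 by simp
  then have "p ^ e > 1" using one_less_power epos by blast
  then show ?thesis using Mdef by simp
qed

lemma cop9M: "coprime 9 M"
proof -
  have "\<not> p dvd 3"
  proof
    assume "p dvd 3"
    then have "p \<le> 3" by (simp add: dvd_imp_le)
    then show False using p5 by simp
  qed
  then have "coprime p 3" using prime_imp_coprime[OF pprime] by blast
  then have "coprime p (3 ^ 2)" unfolding coprime_power_right_iff by blast
  then have "coprime (p ^ e) (3 ^ 2)" unfolding coprime_power_left_iff by blast
  then have "coprime (p ^ e) 9" by simp
  then show ?thesis using Mdef by (simp add: coprime_commute)
qed

definition c0 where "c0 = (SOME c. [M * c = 1] (mod 9))"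
definition d0 where "d0 = (SOME d. [9 * d = 1] (mod M))"

lemma c0_prop: "[M * c0 = 1] (mod 9)"
proof -
  have "\<exists>c. [M * c = 1] (mod 9)" using cong_solve_coprime_nat[of M 9] cop9M
    by (simp add: coprime_commute)
  then show ?thesis unfolding c0_def by (rule someI_ex)
qed

lemma d0_prop: "[9 * d0 = 1] (mod M)"
proof -
  have "\<exists>d. [9 * d = 1] (mod M)" using cong_solve_coprime_nat[of 9 M] cop9M by simp
  then show ?thesis unfolding d0_def by (rule someI_ex)
qed

definition piK where "piK a = a [^] (M * c0)"
definition piP where "piP a = a [^] (9 * d0)"
definition KK where "KK = {x\<in>carrier G. x [^] (9::nat) = \<one>}"
definition PP where "PP = {x\<in>carrier G. x [^] M = \<one>}"

lemma pow_mod_gen: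
  fixes m n :: nat
  assumes "x \<in> carrier G" "x [^] m = \<one>"
  shows "x [^] n = x [^] (n mod m)"
proof -
  have "x [^] n = x [^] (m * (n div m)) \<otimes> x [^] (n mod m)"
    using nat_pow_mult[OF assms(1), of "m * (n div m)" "n mod m"] by (simp only: mult_div_mod_eq)
  also have "x [^] (m * (n div m)) = (x [^] m) [^] (n div m)" using nat_pow_pow[OF assms(1)] by simp
  also have "\<dots> = \<one>" using assms(2) by simp
  also have "\<one> \<otimes> x [^] (n mod m) = x [^] (n mod m)" using assms(1) by simp
  finally show ?thesis .
qed

lemma pow_ord9M: "x \<in> carrier G \<Longrightarrow> x [^] (9 * M) = \<one>"
  using pow_order_eq_1 order_G by metis

lemma piK_closed: "a \<in> carrier G \<Longrightarrow> piK a \<in> carrier G" unfolding piK_def by simp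
lemma piP_closed: "a \<in> carrier G \<Longrightarrow> piP a \<in> carrier G" unfolding piP_def by simp

lemma piK_K: "a \<in> carrier G \<Longrightarrow> piK a \<in> KK"
proof -
  assume a: "a \<in> carrier G"
  have "(a [^] (M * c0)) [^] (9::nat) = (a [^] (9 * M)) [^] c0" using a by (simp add: nat_pow_pow algebra_simps)
  also have "\<dots> = \<one>" using pow_ord9M[OF a] by simp
  finally show ?thesis unfolding KK_def piK_def using a by simp
qed

lemma piP_P: "a \<in> carrier G \<Longrightarrow> piP a \<in> PP"
proof -
  assume a: "a \<in> carrier G"
  have "(a [^] (9 * d0)) [^] M = (a [^] (9 * M)) [^] d0" using a by (simp add: nat_pow_pow algebra_simps)
  also have "\<dots> = \<one>" using pow_ord9M[OF a] by simp
  finally show ?thesis unfolding PP_def piP_def using a by simp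
qed

lemma K_piK: "h \<in> KK \<Longrightarrow> piK h = h"
proof -
  assume h: "h \<in> KK"
  then have hc: "h \<in> carrier G" and h9: "h [^] (9::nat) = \<one>" unfolding KK_def by auto
  have "(M * c0) mod 9 = 1" using c0_prop unfolding cong_def by simp
  then show ?thesis unfolding piK_def using pow_mod_gen[OF hc h9, of "M * c0"] hc by simp
qed

lemma K_piP: "h \<in> KK \<Longrightarrow> piP h = \<one>"
proof -
  assume h: "h \<in> KK"
  then have hc: "h \<in> carrier G" and h9: "h [^] (9::nat) = \<one>" unfolding KK_def by auto
  show ?thesis unfolding piP_def using h9 hc by (simp add: nat_pow_pow[symmetric])
qed

lemma P_piP: "g \<in> PP \<Longrightarrow> piP g = g"
proof -
  assume g: "g \<in> PP"
  then have gc: "g \<in> carrier G" and gM: "g [^] M = \<one>" unfolding PP_def by auto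
  have "(9 * d0) mod M = 1" using d0_prop M_gt1 unfolding cong_def by simp
  then show ?thesis unfolding piP_def using pow_mod_gen[OF gc gM, of "9 * d0"] gc by simp
qed

lemma P_piK: "g \<in> PP \<Longrightarrow> piK g = \<one>"
proof -
  assume g: "g \<in> PP"
  then have gc: "g \<in> carrier G" and gM: "g [^] M = \<one>" unfolding PP_def by auto
  show ?thesis unfolding piK_def using gM gc by (simp add: nat_pow_pow[symmetric])
qed

lemma decomp: "a \<in> carrier G \<Longrightarrow> piK a \<otimes> piP a = a"
proof -
  assume a: "a \<in> carrier G"
  have c1: "[M * c0 + 9 * d0 = 1] (mod 9)"
  proof -
    have "[M * c0 + 9 * d0 = 1 + 0] (mod 9)"
      by (rule cong_add[OF c0_prop]) (simp add: cong_0_iff)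
    then show ?thesis by simp
  qed
  have c2: "[M * c0 + 9 * d0 = 1] (mod M)"
  proof -
    have "[M * c0 + 9 * d0 = 0 + 1] (mod M)"
      by (rule cong_add[OF _ d0_prop]) (simp add: cong_0_iff)
    then show ?thesis by simp
  qed
  have "[M * c0 + 9 * d0 = 1] (mod 9 * M)" using coprime_cong_mult_nat[OF c1 c2 cop9M] .
  then have "(M * c0 + 9 * d0) mod (9 * M) = 1" using M_gt1 unfolding cong_def by simp
  then have "a [^] (M * c0 + 9 * d0) = a" using pow_mod_gen[OF a pow_ord9M[OF a], of "M * c0 + 9 * d0"] a by simp
  then show ?thesis unfolding piK_def piP_def using a by (simp add: nat_pow_mult)
qed

lemma piK_mult: "a \<in> carrier G \<Longrightarrow> b \<in> carrier G \<Longrightarrow> piK (a \<otimes> b) = piK a \<otimes> piK b"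
  unfolding piK_def by (simp add: nat_pow_distrib)
lemma piP_mult: "a \<in> carrier G \<Longrightarrow> b \<in> carrier G \<Longrightarrow> piP (a \<otimes> b) = piP a \<otimes> piP b"
  unfolding piP_def by (simp add: nat_pow_distrib)
lemma piK_inv: "a \<in> carrier G \<Longrightarrow> piK (inv a) = inv (piK a)"
  unfolding piK_def by (simp add: nat_pow_inv)
lemma piP_inv: "a \<in> carrier G \<Longrightarrow> piP (inv a) = inv (piP a)"
  unfolding piP_def by (simp add: nat_pow_inv)

lemma KK_sub: "KK \<subseteq> carrier G" unfolding KK_def by auto
lemma PP_sub: "PP \<subseteq> carrier G" unfolding PP_def by auto

lemma inK_iff: "x \<in> carrier G \<Longrightarrow> x \<in> KK \<longleftrightarrow> piP x = \<one>"
proof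
  assume "x \<in> KK" then show "piP x = \<one>" by (rule K_piP)
next
  assume x: "x \<in> carrier G" and "piP x = \<one>"
  then have "x = piK x" using decomp[OF x] piK_closed[OF x] by simp
  then show "x \<in> KK" using piK_K[OF x] by simp
qed

lemma inP_iff: "x \<in> carrier G \<Longrightarrow> x \<in> PP \<longleftrightarrow> piK x = \<one>"
proof
  assume "x \<in> PP" then show "piK x = \<one>" by (rule P_piK)
next
  assume x: "x \<in> carrier G" and "piK x = \<one>"
  then have "x = piP x" using decomp[OF x] piP_closed[OF x] by simp
  then show "x \<in> PP" using piP_P[OF x] by simp
qed

lemma one_K: "\<one> \<in> KK" unfolding KK_def by simp
lemma one_P: "\<one> \<in> PP" unfolding PP_def by simp

lemma card_KP: "card KK * card PP = 9 * M"
proof -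
  have "bij_betw (\<lambda>a. (piK a, piP a)) (carrier G) (KK \<times> PP)"
  proof (rule bij_betwI[where g = "\<lambda>(h, g). h \<otimes> g"])
    show "(\<lambda>a. (piK a, piP a)) \<in> carrier G \<rightarrow> KK \<times> PP" using piK_K piP_P by auto
    show "(\<lambda>(h, g). h \<otimes> g) \<in> KK \<times> PP \<rightarrow> carrier G" using KK_sub PP_sub by auto
    show "(case (piK x, piP x) of (h, g) \<Rightarrow> h \<otimes> g) = x" if "x \<in> carrier G" for x
      using decomp[OF that] by simp
    show "(piK (case y of (h, g) \<Rightarrow> h \<otimes> g), piP (case y of (h, g) \<Rightarrow> h \<otimes> g)) = y" if "y \<in> KK \<times> PP" for y
    proof -
      obtain h g where y: "y = (h, g)" "h \<in> KK" "g \<in> PP" using \<open>y \<in> KK \<times> PP\<close> by blast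
      have hc: "h \<in> carrier G" and gc: "g \<in> carrier G" using y KK_sub PP_sub by auto
      have "piK (h \<otimes> g) = h" using piK_mult[OF hc gc] K_piK[OF y(2)] P_piK[OF y(3)] hc by simp
      moreover have "piP (h \<otimes> g) = g" using piP_mult[OF hc gc] K_piP[OF y(2)] P_piP[OF y(3)] gc by simp
      ultimately show ?thesis using y by simp
    qed
  qed
  then have "card (carrier G) = card (KK \<times> PP)" by (rule bij_betw_same_card)
  then show ?thesis using cardG by (simp add: card_cartesian_product)
qed

lemma sub_pow_card:
  assumes "subgroup H G" "x \<in> H" "finite H"
  shows "x [^] card H = \<one>"
proof -
  interpret H: group "G\<lparr>carrier := H\<rparr>" using subgroup.subgroup_is_group[OF assms(1)] is_group by blast
  have "x [^]\<^bsub>G\<lparr>carrier := H\<rparr>\<^esub> order (G\<lparr>carrier := H\<rparr>) = \<one>\<^bsub>G\<lparr>carrier := H\<rparr>\<^esub>"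
    using H.pow_order_eq_1 assms(2) by simp
  then show ?thesis using nat_pow_consistent[of x "card H" H] by (simp add: order_def)
qed

lemma card_K9: "card KK = 9" and card_PM: "card PP = M"
proof -
  have finK: "finite KK" using fin KK_sub finite_subset by blast
  have finP: "finite PP" using fin PP_sub finite_subset by blast
  obtain H where H: "subgroup H G" "card H = 3 ^ 2"
    using sylow_thm[of 3 G 2 M] fin order_G is_group by auto
  have finH: "finite H" using subgroup.subset[OF H(1)] fin finite_subset by blast
  have "H \<subseteq> KK"
  proof
    fix x assume x: "x \<in> H"
    then have "x [^] card H = \<one>" using sub_pow_card[OF H(1) x finH] by simp
    moreover have "x \<in> carrier G" using x subgroup.subset[OF H(1)] by auto
    moreover have "card H = 9" using H(2) by simp
    ultimately show "x \<in> KK" unfolding KK_def by simp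
  qed
  then have "card H \<le> card KK" by (rule card_mono[OF finK])
  then have k9: "card KK \<ge> 9" using H(2) by simp
  obtain Q where Q: "subgroup Q G" "card Q = p ^ e"
    using sylow_thm[of p G e 9] fin order_G is_group pprime Mdef by (auto simp: mult.commute)
  have finQ: "finite Q" using subgroup.subset[OF Q(1)] fin finite_subset by blast
  have "Q \<subseteq> PP"
  proof
    fix x assume x: "x \<in> Q"
    then have "x [^] card Q = \<one>" using sub_pow_card[OF Q(1) x finQ] by simp
    moreover have "x \<in> carrier G" using x subgroup.subset[OF Q(1)] by auto
    moreover have "card Q = M" using Q(2) Mdef by simp
    ultimately show "x \<in> PP" unfolding PP_def by simp
  qed
  then have "card Q \<le> card PP" by (rule card_mono[OF finP])
  then have pM: "card PP \<ge> M" using Q(2) Mdef by simp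
  have prod: "card KK * card PP = 9 * M" by (rule card_KP)
  show "card KK = 9"
  proof (rule ccontr)
    assume "card KK \<noteq> 9"
    then have "card KK \<ge> 10" using k9 by simp
    then have "card KK * card PP \<ge> 10 * M" using pM mult_le_mono by blast
    then show False using prod M_gt1 by simp
  qed
  then show "card PP = M" using prod by simp
qed

end

context pdsl
begin

lemma fiber_moments:
  assumes Q: "finite Q" and pi: "\<And>a. a \<in> carrier G \<Longrightarrow> f a \<in> Q"
    and eqv: "\<And>a b. a \<in> carrier G \<Longrightarrow> b \<in> carrier G \<Longrightarrow> (f a = f b \<longleftrightarrow> a \<otimes> inv b \<in> Sx)"
  shows "(\<Sum>g\<in>Q. card {a\<in>D. f a = g}) = card D"
    and "(\<Sum>g\<in>Q. card {a\<in>D. f a = g} ^ 2) = card (pairs_in Sx)"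
proof -
  have fF: "finite {a\<in>D. f a = g}" for g using finD by simp
  have "D = (\<Union>g\<in>Q. {a\<in>D. f a = g})" using pi Dsub by auto
  moreover have "card (\<Union>g\<in>Q. {a\<in>D. f a = g}) = (\<Sum>g\<in>Q. card {a\<in>D. f a = g})"
    by (rule card_UN_disjoint) (use Q fF in auto)
  ultimately show "(\<Sum>g\<in>Q. card {a\<in>D. f a = g}) = card D" by simp
  have "pairs_in Sx = (\<Union>g\<in>Q. {a\<in>D. f a = g} \<times> {a\<in>D. f a = g})"
  proof
    show "pairs_in Sx \<subseteq> (\<Union>g\<in>Q. {a\<in>D. f a = g} \<times> {a\<in>D. f a = g})"
    proof
      fix z assume "z \<in> pairs_in Sx"
      then obtain a b where ab: "z = (a, b)" "a \<in> D" "b \<in> D" "a \<otimes> inv b \<in> Sx" unfolding pairs_in_def by auto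
      then have "f a = f b" using eqv Dsub by auto
      then show "z \<in> (\<Union>g\<in>Q. {a\<in>D. f a = g} \<times> {a\<in>D. f a = g})" using ab pi Dsub by auto
    qed
    show "(\<Union>g\<in>Q. {a\<in>D. f a = g} \<times> {a\<in>D. f a = g}) \<subseteq> pairs_in Sx"
    proof
      fix z assume "z \<in> (\<Union>g\<in>Q. {a\<in>D. f a = g} \<times> {a\<in>D. f a = g})"
      then obtain a b where ab: "z = (a, b)" "a \<in> D" "b \<in> D" "f a = f b" by auto
      then have "a \<otimes> inv b \<in> Sx" using eqv Dsub by auto
      then show "z \<in> pairs_in Sx" using ab unfolding pairs_in_def by auto
    qed
  qed
  moreover have "card (\<Union>g\<in>Q. {a\<in>D. f a = g} \<times> {a\<in>D. f a = g}) = (\<Sum>g\<in>Q. card ({a\<in>D. f a = g} \<times> {a\<in>D. f a = g}))"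
    by (rule card_UN_disjoint) (use Q fF in auto)
  ultimately show "(\<Sum>g\<in>Q. card {a\<in>D. f a = g} ^ 2) = card (pairs_in Sx)"
    by (simp add: card_cartesian_product power2_eq_square)
qed

definition EE where "EE g = card {a\<in>D. piP a = g}"
definition bK where "bK h = card {a\<in>D. piK a = h}"

lemma eqvP: "a \<in> carrier G \<Longrightarrow> b \<in> carrier G \<Longrightarrow> (piP a = piP b \<longleftrightarrow> a \<otimes> inv b \<in> KK)"
proof -
  assume a: "a \<in> carrier G" and b: "b \<in> carrier G"
  have "a \<otimes> inv b \<in> KK \<longleftrightarrow> piP (a \<otimes> inv b) = \<one>" using inK_iff a b by simp
  also have "piP (a \<otimes> inv b) = piP a \<otimes> inv (piP b)" using piP_mult piP_inv a b by simp
  also have "piP a \<otimes> inv (piP b) = \<one> \<longleftrightarrow> piP a = \<one> \<otimes> piP b"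
    using inv_solve_right'[of \<one> "piP a" "piP b"] piP_closed a b by simp
  finally show ?thesis using piP_closed b by simp
qed

lemma eqvK: "a \<in> carrier G \<Longrightarrow> b \<in> carrier G \<Longrightarrow> (piK a = piK b \<longleftrightarrow> a \<otimes> inv b \<in> PP)"
proof -
  assume a: "a \<in> carrier G" and b: "b \<in> carrier G"
  have "a \<otimes> inv b \<in> PP \<longleftrightarrow> piK (a \<otimes> inv b) = \<one>" using inP_iff a b by simp
  also have "piK (a \<otimes> inv b) = piK a \<otimes> inv (piK b)" using piK_mult piK_inv a b by simp
  also have "piK a \<otimes> inv (piK b) = \<one> \<longleftrightarrow> piK a = \<one> \<otimes> piK b"
    using inv_solve_right'[of \<one> "piK a" "piK b"] piK_closed a b by simp
  finally show ?thesis using piK_closed b by simp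
qed

lemma finK: "finite KK" using fin KK_sub finite_subset by blast
lemma finP: "finite PP" using fin PP_sub finite_subset by blast

lemma pairs_in_int:
  assumes "Sx \<subseteq> carrier G" "\<one> \<in> Sx"
  shows "int (card (pairs_in Sx)) = kk + lam * int (card (D \<inter> Sx)) + mu * (int (card Sx) - 1 - int (card (D \<inter> Sx)))"
proof -
  have finS: "finite Sx" using assms fin finite_subset by blast
  have "card (pairs_in Sx) = card (fib \<one>) + (\<Sum>x\<in>Sx - {\<one>}. card (fib x))"
    using card_pairs_in[OF assms(1)] finS assms(2) by (simp add: sum.remove)
  also have "(\<Sum>x\<in>Sx - {\<one>}. card (fib x)) = (\<Sum>x\<in>Sx - {\<one>}. card (cset G D x))"
    by (rule sum.cong) (auto simp: fib_ne)
  finally have "int (card (pairs_in Sx)) = int (card D) + (\<Sum>x\<in>Sx - {\<one>}. int (card (cset G D x)))"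
    using fib_one by (simp add: of_nat_sum)
  also have "(\<Sum>x\<in>Sx - {\<one>}. int (card (cset G D x))) = lam * int (card (D \<inter> (Sx - {\<one>}))) + mu * int (card ((Sx - {\<one>}) - D))"
    by (rule sum_cset) (use assms in auto)
  also have "D \<inter> (Sx - {\<one>}) = D \<inter> Sx" using one_notin by auto
  also have "card ((Sx - {\<one>}) - D) = card Sx - 1 - card (D \<inter> Sx)"
  proof -
    have "(Sx - {\<one>}) - D = (Sx - {\<one>}) - (D \<inter> Sx)" by auto
    moreover have "card ((Sx - {\<one>}) - (D \<inter> Sx)) = card (Sx - {\<one>}) - card (D \<inter> Sx)"
      by (rule card_Diff_subset) (use finS one_notin in auto)
    moreover have "card (Sx - {\<one>}) = card Sx - 1" using finS assms(2) by simp
    ultimately show ?thesis by simp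
  qed
  also have "int (card Sx - 1 - card (D \<inter> Sx)) = int (card Sx) - 1 - int (card (D \<inter> Sx))"
  proof -
    have "card (D \<inter> Sx) \<le> card (Sx - {\<one>})" using finS one_notin by (intro card_mono) auto
    moreover have "card (Sx - {\<one>}) = card Sx - 1" using finS assms(2) by simp
    moreover have "card Sx \<ge> 1" using finS assms(2) by (metis One_nat_def Suc_leI card_gt_0_iff empty_iff)
    ultimately show ?thesis by simp
  qed
  finally show ?thesis using cardD' by simp
qed

lemma sumE: "(\<Sum>g\<in>PP. EE g) = card D"
  unfolding EE_def using fiber_moments(1)[OF finP piP_P eqvP] .

lemma sumE2: "int (\<Sum>g\<in>PP. EE g ^ 2) = kk + lam * int (EE \<one>) + mu * (8 - int (EE \<one>))"
proof -
  have "(\<Sum>g\<in>PP. EE g ^ 2) = card (pairs_in KK)"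
    unfolding EE_def using fiber_moments(2)[OF finP piP_P eqvP] .
  moreover have "EE \<one> = card (D \<inter> KK)"
  proof -
    have "{a\<in>D. piP a = \<one>} = D \<inter> KK" using inK_iff Dsub by auto
    then show ?thesis unfolding EE_def by simp
  qed
  ultimately show ?thesis using pairs_in_int[OF KK_sub one_K] card_K9 by simp
qed

lemma sumB: "(\<Sum>h\<in>KK. bK h) = card D"
  unfolding bK_def using fiber_moments(1)[OF finK piK_K eqvK] .

lemma sumB2: "int (\<Sum>h\<in>KK. bK h ^ 2) = kk + lam * int (bK \<one>) + mu * (int M - 1 - int (bK \<one>))"
proof -
  have "(\<Sum>h\<in>KK. bK h ^ 2) = card (pairs_in PP)"
    unfolding bK_def using fiber_moments(2)[OF finK piK_K eqvK] .
  moreover have "bK \<one> = card (D \<inter> PP)"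
  proof -
    have "{a\<in>D. piK a = \<one>} = D \<inter> PP" using inP_iff Dsub by auto
    then show ?thesis unfolding bK_def by simp
  qed
  ultimately show ?thesis using pairs_in_int[OF PP_sub one_P] card_PM by simp
qed

lemma bK_one: "bK \<one> = card (D \<inter> PP)"
proof -
  have "{a\<in>D. piK a = \<one>} = D \<inter> PP" using inP_iff Dsub by auto
  then show ?thesis unfolding bK_def by simp
qed

lemma EE_one: "EE \<one> = card (D \<inter> KK)"
proof -
  have "{a\<in>D. piP a = \<one>} = D \<inter> KK" using inK_iff Dsub by auto
  then show ?thesis unfolding EE_def by simp
qed

lemma EE_le9: "g \<in> PP \<Longrightarrow> EE g \<le> 9"
proof -
  assume g: "g \<in> PP"
  have "{a\<in>D. piP a = g} \<subseteq> (\<lambda>h. h \<otimes> g) ` KK"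
  proof
    fix a assume a: "a \<in> {a\<in>D. piP a = g}"
    then have ac: "a \<in> carrier G" using Dsub by auto
    then have "a = piK a \<otimes> g" using decomp[OF ac] a by simp
    then show "a \<in> (\<lambda>h. h \<otimes> g) ` KK" using piK_K[OF ac] by blast
  qed
  then have "EE g \<le> card ((\<lambda>h. h \<otimes> g) ` KK)" unfolding EE_def
    by (intro card_mono) (use finK in auto)
  also have "\<dots> \<le> card KK" by (rule card_image_le[OF finK])
  finally show ?thesis using card_K9 by simp
qed

lemma P_trivial:
  assumes g: "g \<in> PP" and j: "g [^] j = \<one>" and cj: "coprime j M"
  shows "g = \<one>"
proof -
  have gc: "g \<in> carrier G" and gM: "g [^] M = \<one>" using g unfolding PP_def by auto
  have "ord g dvd j" using pow_eq_id[OF gc] j by simp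
  moreover have "ord g dvd M" using pow_eq_id[OF gc] gM by simp
  ultimately have "ord g dvd gcd j M" by simp
  moreover have "gcd j M = 1" using cj[unfolded coprime_iff_gcd_eq_1] .
  ultimately have "ord g dvd 1" by simp
  then have "g [^] (1::nat) = \<one>" by (rule iffD2[OF pow_eq_id[OF gc]])
  then show ?thesis using nat_pow_eone[OF gc] by metis
qed

lemma cop3M: "coprime 3 M"
proof -
  have "(3::nat) dvd 9" by simp
  then show ?thesis using coprime_divisors[of 3 9 M M] cop9M by simp
qed

lemma M_odd: "odd M"
proof -
  have "odd p" using prime_odd_nat[OF pprime] p5 by simp
  then show ?thesis using Mdef by simp
qed

lemma cop2M: "coprime 2 M" using M_odd by simp

lemma cube_inj_P:
  assumes x: "x \<in> PP" and y: "y \<in> PP" and eq: "x [^] (3::nat) = y [^] (3::nat)"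
  shows "x = y"
proof -
  have xc: "x \<in> carrier G" and yc: "y \<in> carrier G" using x y PP_sub by auto
  have xy: "x \<otimes> inv y \<in> PP"
  proof -
    have "(x \<otimes> inv y) [^] M = x [^] M \<otimes> inv (y [^] M)" using xc yc by (simp add: nat_pow_distrib nat_pow_inv)
    then show ?thesis unfolding PP_def using x y xc yc unfolding PP_def by simp
  qed
  have "(x \<otimes> inv y) [^] (3::nat) = x [^] (3::nat) \<otimes> inv (y [^] (3::nat))" using xc yc by (simp add: nat_pow_distrib nat_pow_inv)
  also have "\<dots> = \<one>" using eq yc by simp
  finally have "x \<otimes> inv y = \<one>" using P_trivial[OF xy _ cop3M] by simp
  then show ?thesis using inv_solve_right'[of \<one> x y] xc yc by simp
qed

lemma piP_pow: "a \<in> carrier G \<Longrightarrow> piP (a [^] (n::nat)) = piP a [^] n"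
  unfolding piP_def by (simp add: nat_pow_pow mult.commute)

lemma piK_pow: "a \<in> carrier G \<Longrightarrow> piK (a [^] (n::nat)) = piK a [^] n"
  unfolding piK_def by (simp add: nat_pow_pow mult.commute)

end

lemma cs_int:
  fixes x :: "'i \<Rightarrow> int"
  assumes "finite I"
  shows "(\<Sum>i\<in>I. x i) ^ 2 \<le> int (card I) * (\<Sum>i\<in>I. x i ^ 2)"
proof -
  have "0 \<le> (\<Sum>i\<in>I. \<Sum>j\<in>I. (x i - x j) ^ 2)" by (intro sum_nonneg) simp
  also have "(\<Sum>i\<in>I. \<Sum>j\<in>I. (x i - x j) ^ 2) = (\<Sum>i\<in>I. \<Sum>j\<in>I. x i ^ 2) + (\<Sum>i\<in>I. \<Sum>j\<in>I. x j ^ 2) - 2 * (\<Sum>i\<in>I. \<Sum>j\<in>I. x i * x j)"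
    by (simp add: power2_diff sum.distrib sum_subtractf sum_distrib_left mult.assoc)
  also have "(\<Sum>i\<in>I. \<Sum>j\<in>I. x i * x j) = (\<Sum>i\<in>I. x i) * (\<Sum>j\<in>I. x j)"
    by (simp add: sum_product)
  also have "(\<Sum>i\<in>I. \<Sum>j\<in>I. x i ^ 2) = int (card I) * (\<Sum>i\<in>I. x i ^ 2)"
    by (simp add: sum_distrib_left)
  also have "(\<Sum>i\<in>I. \<Sum>j\<in>I. x j ^ 2) = int (card I) * (\<Sum>i\<in>I. x i ^ 2)"
    by simp
  finally show ?thesis by (simp add: power2_eq_square)
qed

context pdsl
begin

lemma E_mod3:
  assumes g: "g \<in> PP"
  shows "3 dvd int (EE g) - 2 * (if g = \<one> then 1 else 0)"
proof -
  have gc: "g \<in> carrier G" using g PP_sub by auto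
  define Y where "Y = {y\<in>carrier G. piP y = g [^] (3::nat)}"
  have finY: "finite Y" unfolding Y_def using fin by simp
  have eq: "{a\<in>D. piP a = g} = (\<Union>y\<in>Y. {a\<in>D. a [^] (3::nat) = y})"
  proof
    show "{a\<in>D. piP a = g} \<subseteq> (\<Union>y\<in>Y. {a\<in>D. a [^] (3::nat) = y})"
    proof
      fix a assume a: "a \<in> {a\<in>D. piP a = g}"
      then have ac: "a \<in> carrier G" using Dsub by auto
      have "a [^] (3::nat) \<in> Y" unfolding Y_def using ac a piP_pow[OF ac] by simp
      then show "a \<in> (\<Union>y\<in>Y. {a\<in>D. a [^] (3::nat) = y})" using a by blast
    qed
    show "(\<Union>y\<in>Y. {a\<in>D. a [^] (3::nat) = y}) \<subseteq> {a\<in>D. piP a = g}"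
    proof
      fix a assume "a \<in> (\<Union>y\<in>Y. {a\<in>D. a [^] (3::nat) = y})"
      then obtain y where y: "y \<in> Y" "a \<in> D" "a [^] (3::nat) = y" by blast
      then have ac: "a \<in> carrier G" using Dsub by auto
      have "piP a [^] (3::nat) = piP (a [^] (3::nat))" using piP_pow[OF ac] by simp
      also have "\<dots> = piP y" using y by simp
      also have "\<dots> = g [^] (3::nat)" using y(1) unfolding Y_def by simp
      finally have "piP a [^] (3::nat) = g [^] (3::nat)" .
      then have "piP a = g" using cube_inj_P[OF piP_P[OF ac] g] by simp
      then show "a \<in> {a\<in>D. piP a = g}" using y by simp
    qed
  qed
  have "EE g = (\<Sum>y\<in>Y. card {a\<in>D. a [^] (3::nat) = y})"
    unfolding EE_def eq by (rule card_UN_disjoint) (use finY finD in auto)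
  then have "int (EE g) = (\<Sum>y\<in>Y. int (card {a\<in>D. a [^] (3::nat) = y}))" by simp
  also have "\<dots> = (\<Sum>y\<in>Y. int (card {a\<in>D. a [^] (3::nat) = y}) - 2 * (if y = \<one> then 1 else 0)) + 2 * (\<Sum>y\<in>Y. if y = \<one> then 1 else 0)"
    by (simp add: sum_subtractf sum_distrib_left)
  also have "(\<Sum>y\<in>Y. if y = \<one> then 1 else 0 :: int) = (if \<one> \<in> Y then 1 else 0)"
    using finY by (simp add: sum.delta')
  also have "(\<one> \<in> Y) = (g = \<one>)"
  proof -
    have "\<one> \<in> Y \<longleftrightarrow> \<one> = g [^] (3::nat)" unfolding Y_def using K_piP[OF one_K] by auto
    also have "\<dots> \<longleftrightarrow> g = \<one>"
    proof
      assume "\<one> = g [^] (3::nat)"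
      then show "g = \<one>" using P_trivial[OF g _ cop3M] by simp
    qed simp
    finally show ?thesis .
  qed
  finally have e: "int (EE g) - 2 * (if g = \<one> then 1 else 0) = (\<Sum>y\<in>Y. int (card {a\<in>D. a [^] (3::nat) = y}) - 2 * (if y = \<one> then 1 else 0))"
    by simp
  have "3 dvd (\<Sum>y\<in>Y. int (card {a\<in>D. a [^] (3::nat) = y}) - 2 * (if y = \<one> then 1 else 0))"
    by (rule dvd_sum) (use mod3 Y_def in auto)
  then show ?thesis using e by simp
qed

lemma pow_surj:
  assumes t: "coprime t (9 * M)" and b: "b \<in> carrier G"
  shows "\<exists>a\<in>carrier G. a [^] t = b"
proof -
  have "(\<lambda>a. a [^] t) ` carrier G = carrier G"
    by (rule endo_inj_surj[OF fin]) (auto intro: inj_onI pow_inj[OF t])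
  then show ?thesis using b by (metis imageE)
qed

lemma E_inv:
  assumes t: "coprime t (9 * M)" and g: "g \<in> PP"
  shows "EE (g [^] t) = EE g"
proof -
  have gc: "g \<in> carrier G" using g PP_sub by auto
  have "{a\<in>D. piP a = g [^] t} = (\<lambda>a. a [^] t) ` {a\<in>D. piP a = g}"
  proof
    show "{a\<in>D. piP a = g [^] t} \<subseteq> (\<lambda>a. a [^] t) ` {a\<in>D. piP a = g}"
    proof
      fix b assume b: "b \<in> {a\<in>D. piP a = g [^] t}"
      then have bc: "b \<in> carrier G" using Dsub by auto
      obtain a where a: "a \<in> carrier G" "a [^] t = b" using pow_surj[OF t bc] by blast
      have aD: "a \<in> D" using mult_coprime[OF t a(1)] a b by simp
      have "piP a [^] t = piP (a [^] t)" using piP_pow[OF a(1)] by simp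
      also have "\<dots> = g [^] t" using a(2) b by simp
      finally have "piP a [^] t = g [^] t" .
      then have "piP a = g" using pow_inj[OF t piP_closed[OF a(1)] gc] by simp
      then show "b \<in> (\<lambda>a. a [^] t) ` {a\<in>D. piP a = g}" using a aD by blast
    qed
    show "(\<lambda>a. a [^] t) ` {a\<in>D. piP a = g} \<subseteq> {a\<in>D. piP a = g [^] t}"
    proof
      fix b assume "b \<in> (\<lambda>a. a [^] t) ` {a\<in>D. piP a = g}"
      then obtain a where a: "a \<in> D" "piP a = g" "b = a [^] t" by blast
      then have ac: "a \<in> carrier G" using Dsub by auto
      have "b \<in> D" using mult_coprime[OF t ac] a by simp
      moreover have "piP b = g [^] t" using piP_pow[OF ac] a by simp
      ultimately show "b \<in> {a\<in>D. piP a = g [^] t}" by simp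
    qed
  qed
  moreover have "inj_on (\<lambda>a. a [^] t) {a\<in>D. piP a = g}"
    by (rule inj_onI) (use pow_inj[OF t] Dsub in auto)
  ultimately show ?thesis unfolding EE_def by (simp add: card_image)
qed

lemma K_trivial:
  fixes j :: nat
  assumes h: "h \<in> KK" and j: "h [^] j = \<one>" and cj: "coprime j 9"
  shows "h = \<one>"
proof -
  have hc: "h \<in> carrier G" and h9: "h [^] (9::nat) = \<one>" using h unfolding KK_def by auto
  have "ord h dvd j" using pow_eq_id[OF hc] j by simp
  moreover have "ord h dvd 9" using pow_eq_id[OF hc] h9 by simp
  ultimately have "ord h dvd gcd j 9" by simp
  moreover have "gcd j 9 = 1" using cj[unfolded coprime_iff_gcd_eq_1] .
  ultimately have "ord h dvd 1" by simp
  then have "h [^] (1::nat) = \<one>" by (rule iffD2[OF pow_eq_id[OF hc]])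
  then show ?thesis using nat_pow_eone[OF hc] by metis
qed

lemma E_parity:
  assumes g: "g \<in> PP"
  shows "even (EE g + (if g \<in> D then 1 else 0))"
proof -
  have gc: "g \<in> carrier G" using g PP_sub by auto
  define t where "t = 1 + 7 * (M * c0)"
  have t9: "[t = 8] (mod 9)"
  proof -
    have "[1 + 7 * (M * c0) = 1 + 7 * 1] (mod 9)"
      by (intro cong_add cong_mult cong_refl c0_prop)
    then show ?thesis unfolding t_def by simp
  qed
  have tM: "[t = 1] (mod M)"
  proof -
    have "[1 + 7 * (M * c0) = 1 + 0] (mod M)"
      by (intro cong_add cong_refl) (simp add: cong_0_iff)
    then show ?thesis unfolding t_def by simp
  qed
  have c89: "coprime (8::nat) 9" using coprime_Suc_right_nat[of 8] by simp
  have ct9: "coprime t 9"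
    using cong_imp_coprime[OF cong_sym[OF t9] c89] .
  have ctM: "coprime t M"
    using cong_imp_coprime[OF cong_sym[OF tM]] by simp
  have ct: "coprime t (9 * M)" using ct9 ctM by simp
  have powK: "h [^] t = inv h" if h: "h \<in> KK" for h
  proof -
    have hc: "h \<in> carrier G" and h9: "h [^] (9::nat) = \<one>" using h unfolding KK_def by auto
    have "t mod 9 = 8" using t9 unfolding cong_def by simp
    then have "h [^] t = h [^] (8::nat)" using pow_mod_gen[OF hc h9, of t] by simp
    moreover have "h [^] (8::nat) \<otimes> h = \<one>" using h9 hc by (simp add: nat_pow_Suc[symmetric])
    ultimately show ?thesis using inv_equality[of "h [^] (8::nat)" h] hc by simp
  qed
  have gP: "x [^] t = x" if x: "x \<in> PP" for x
  proof -
    have xc: "x \<in> carrier G" and xM: "x [^] M = \<one>" using x unfolding PP_def by auto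
    have "t mod M = 1" using tM M_gt1 unfolding cong_def by simp
    then show ?thesis using pow_mod_gen[OF xc xM, of t] xc by simp
  qed
  have tt: "a [^] (t * t) = a" if a: "a \<in> carrier G" for a
  proof -
    have c1: "[t * t = 1] (mod 9)"
    proof -
      have "[t * t = 8 * 8] (mod 9)" using cong_mult[OF t9 t9] .
      then show ?thesis by (simp add: cong_def)
    qed
    have c2: "[t * t = 1] (mod M)" using cong_mult[OF tM tM] by simp
    have "[t * t = 1] (mod 9 * M)" using coprime_cong_mult_nat[OF c1 c2 cop9M] .
    then have "(t * t) mod (9 * M) = 1" using M_gt1 unfolding cong_def by simp
    then show ?thesis using pow_mod_gen[OF a pow_ord9M[OF a], of "t * t"] a by simp
  qed
  define A where "A = {a\<in>D. piP a = g}"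
  have finA: "finite A" unfolding A_def using finD by simp
  have fA: "a [^] t \<in> A" if "a \<in> A" for a
  proof -
    have a: "a \<in> D" "piP a = g" using that unfolding A_def by auto
    then have ac: "a \<in> carrier G" using Dsub by auto
    have "a [^] t \<in> D" using mult_coprime[OF ct ac] a by simp
    moreover have "piP (a [^] t) = g" using piP_pow[OF ac] a gP[OF g] by simp
    ultimately show ?thesis unfolding A_def by simp
  qed
  have ffA: "(a [^] t) [^] t = a" if "a \<in> A" for a
  proof -
    have ac: "a \<in> carrier G" using that Dsub unfolding A_def by auto
    then show ?thesis using tt[OF ac] by (simp add: nat_pow_pow)
  qed
  have fixA: "{a\<in>A. a [^] t = a} = (if g \<in> D then {g} else {})"
  proof -
    have "a [^] t = a \<longleftrightarrow> a = g" if a: "a \<in> A" for a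
    proof -
      have aD: "a \<in> D" and ag: "piP a = g" using a unfolding A_def by auto
      have ac: "a \<in> carrier G" using aD Dsub by auto
      define h where "h = piK a"
      have hK: "h \<in> KK" unfolding h_def using piK_K[OF ac] .
      have hc: "h \<in> carrier G" using hK KK_sub by auto
      have adec: "a = h \<otimes> g" unfolding h_def using decomp[OF ac] ag by simp
      have "a [^] t = h [^] t \<otimes> g [^] t" using adec hc gc by (simp add: nat_pow_distrib)
      also have "\<dots> = inv h \<otimes> g" using powK[OF hK] gP[OF g] by simp
      finally have at: "a [^] t = inv h \<otimes> g" .
      show ?thesis
      proof
        assume "a [^] t = a"
        then have "inv h \<otimes> g = h \<otimes> g" using at adec by simp
        then have "inv h = h" using hc gc by (metis inv_closed r_cancel)
        then have "h \<otimes> h = \<one>" using hc by (metis r_inv)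
        then have "h [^] (2::nat) = \<one>" using hc by (simp add: numeral_2_eq_2)
        then have "h = \<one>" using K_trivial[OF hK] by simp
        then show "a = g" using adec gc by simp
      next
        assume "a = g"
        then show "a [^] t = a" using gP[OF g] by simp
      qed
    qed
    moreover have "g \<in> A \<longleftrightarrow> g \<in> D" unfolding A_def using P_piP[OF g] by simp
    ultimately show ?thesis by auto
  qed
  have ev: "even (card A + card {a\<in>A. a [^] t = a})"
    by (rule involution_parity[OF finA fA ffA])
  have c: "card {a\<in>A. a [^] t = a} = (if g \<in> D then 1 else 0)" using fixA by simp
  have "EE g = card A" unfolding EE_def A_def by simp
  then show ?thesis using ev c by simp
qed

end

context pdsl
begin

lemma E_vals:
  assumes g: "g \<in> PP" "g \<noteq> \<one>"
  shows "(int (EE g) - 3) * (int (EE g) - 6) = (if EE g = 0 \<or> EE g = 9 then 18 else 0)"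
proof -
  have "3 dvd int (EE g)" using E_mod3[OF g(1)] g(2) by simp
  then have "3 dvd EE g" by presburger
  then obtain c where c: "EE g = 3 * c" by blast
  have "c \<le> 3" using EE_le9[OF g(1)] c by simp
  then have "c = 0 \<or> c = 1 \<or> c = 2 \<or> c = 3" by auto
  then show ?thesis using c by auto
qed

lemma pow_in_P: "g \<in> PP \<Longrightarrow> g [^] (n::nat) \<in> PP"
proof -
  assume g: "g \<in> PP"
  then have gc: "g \<in> carrier G" and gM: "g [^] M = \<one>" unfolding PP_def by auto
  have "(g [^] n) [^] M = (g [^] M) [^] n" using gc by (simp add: nat_pow_pow mult.commute)
  then show ?thesis unfolding PP_def using gc gM by simp
qed

theorem contradiction: False
proof -
  define m where "m = EE \<one>"
  have m_le: "m \<le> 8"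
  proof -
    have "D \<inter> KK \<subseteq> KK - {\<one>}" using one_notin by auto
    then have "card (D \<inter> KK) \<le> card (KK - {\<one>})" by (intro card_mono) (use finK in auto)
    then show ?thesis unfolding m_def EE_one using card_K9 one_K finK by simp
  qed
  have m_even: "even m" using E_parity[OF one_P] one_notin unfolding m_def by simp
  have m_3: "3 dvd int m - 2" using E_mod3[OF one_P] unfolding m_def by simp
  have m28: "m = 2 \<or> m = 8" using m_le m_even m_3 by presburger
  define Q where "Q = PP - {\<one>}"
  have finQ: "finite Q" unfolding Q_def using finP by simp
  have cardQ: "card Q = M - 1" unfolding Q_def using card_PM one_P finP by simp
  have S1: "(\<Sum>g\<in>Q. int (EE g)) = kk - int m"
  proof -
    have "(\<Sum>g\<in>PP. int (EE g)) = int (card D)" using sumE by (metis of_nat_sum)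
    moreover have "(\<Sum>g\<in>PP. int (EE g)) = int (EE \<one>) + (\<Sum>g\<in>Q. int (EE g))"
      unfolding Q_def using finP one_P by (simp add: sum.remove)
    ultimately show ?thesis using cardD' unfolding m_def by simp
  qed
  have S2: "(\<Sum>g\<in>Q. int (EE g) ^ 2) = kk + lam * int m + mu * (8 - int m) - int m ^ 2"
  proof -
    have "(\<Sum>g\<in>PP. int (EE g) ^ 2) = int (\<Sum>g\<in>PP. EE g ^ 2)" by (simp add: of_nat_sum)
    also have "\<dots> = kk + lam * int m + mu * (8 - int m)" using sumE2 unfolding m_def .
    finally have "(\<Sum>g\<in>PP. int (EE g) ^ 2) = kk + lam * int m + mu * (8 - int m)" .
    moreover have "(\<Sum>g\<in>PP. int (EE g) ^ 2) = int (EE \<one>) ^ 2 + (\<Sum>g\<in>Q. int (EE g) ^ 2)"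
      unfolding Q_def using finP one_P by (simp add: sum.remove)
    ultimately show ?thesis unfolding m_def by simp
  qed
  define Z where "Z = {g\<in>Q. EE g = 0 \<or> EE g = 9}"
  have Zsum: "18 * int (card Z) = (kk + lam * int m + mu * (8 - int m) - int m ^ 2) - 9 * (kk - int m) + 18 * (int M - 1)"
  proof -
    have "(\<Sum>g\<in>Q. (int (EE g) - 3) * (int (EE g) - 6)) = (\<Sum>g\<in>Q. if EE g = 0 \<or> EE g = 9 then 18 else 0)"
      by (rule sum.cong) (auto simp: Q_def E_vals)
    also have "\<dots> = 18 * int (card Z)" unfolding Z_def using finQ by (simp add: sum.If_cases Int_def)
    finally have e1: "(\<Sum>g\<in>Q. (int (EE g) - 3) * (int (EE g) - 6)) = 18 * int (card Z)" .
    have "(\<Sum>g\<in>Q. (int (EE g) - 3) * (int (EE g) - 6)) = (\<Sum>g\<in>Q. int (EE g) ^ 2) - 9 * (\<Sum>g\<in>Q. int (EE g)) + 18 * int (card Q)"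
      by (simp add: algebra_simps power2_eq_square sum.distrib sum_subtractf sum_distrib_left)
    then show ?thesis using e1 S1 S2 cardQ M_gt1 by (simp add: of_nat_diff)
  qed
  have MNi: "int M = (2 * u + 1) ^ 2" by (rule MN)
  show False
  proof (cases "m = 2")
    case True
    have "18 * int (card Z) = 36" using Zsum True MNi unfolding kk_def lam_def mu_def
      by (simp add: algebra_simps power2_eq_square)
    then have cZ: "card Z = 2" by simp
    then obtain g where gZ: "g \<in> Z" by (metis card.empty ex_in_conv zero_neq_numeral)
    have gP: "g \<in> PP" and g1: "g \<noteq> \<one>" using gZ unfolding Z_def Q_def by auto
    have gc: "g \<in> carrier G" using gP PP_sub by auto
    have c2: "coprime 2 (9 * M)" using cop2M by simp
    have g2Z: "g [^] (2::nat) \<in> Z"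
    proof -
      have "g [^] (2::nat) \<noteq> \<one>" using P_trivial[OF gP _ cop2M] g1 by auto
      moreover have "EE (g [^] (2::nat)) = EE g" using E_inv[OF c2 gP] .
      ultimately show ?thesis using gZ pow_in_P[OF gP] unfolding Z_def Q_def by auto
    qed
    have tpos: "9 * M > 0" using M_gt1 by simp
    have ci: "coprime (9 * M - 1) (9 * M)" using coprime_diff_one_left_nat[OF tpos] .
    have ginv: "g [^] (9 * M - 1) = inv g"
    proof -
      have "g [^] (9 * M - 1) \<otimes> g = g [^] (9 * M - 1 + 1)" using gc by (simp add: nat_pow_mult[symmetric])
      also have "9 * M - 1 + 1 = 9 * M" using tpos by simp
      finally have "g [^] (9 * M - 1) \<otimes> g = \<one>" using pow_ord9M[OF gc] by simp
      then show ?thesis using inv_equality[of "g [^] (9 * M - 1)" g] gc by simp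
    qed
    have giZ: "inv g \<in> Z"
    proof -
      have "inv g \<noteq> \<one>" using g1 gc by (metis inv_inv inv_one)
      moreover have "EE (inv g) = EE g" using E_inv[OF ci gP] ginv by simp
      moreover have "inv g \<in> PP" using pow_in_P[OF gP, of "9 * M - 1"] ginv by simp
      ultimately show ?thesis using gZ unfolding Z_def Q_def by auto
    qed
    have d1: "g \<noteq> g [^] (2::nat)"
    proof
      assume "g = g [^] (2::nat)"
      then have "g = g \<otimes> g" using gc by (simp add: numeral_2_eq_2)
      then show False using g1 gc by simp
    qed
    have d2: "g \<noteq> inv g"
    proof
      assume "g = inv g"
      then have "g \<otimes> g = \<one>" using gc by (metis r_inv)
      then have "g [^] (2::nat) = \<one>" using gc by (simp add: numeral_2_eq_2)
      then show False using P_trivial[OF gP _ cop2M] g1 by simp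
    qed
    have d3: "g [^] (2::nat) \<noteq> inv g"
    proof
      assume "g [^] (2::nat) = inv g"
      then have "g [^] (2::nat) \<otimes> g = \<one>" using gc by simp
      then have "g [^] (3::nat) = \<one>" using gc by (simp add: numeral_3_eq_3 numeral_2_eq_2 m_assoc)
      then show False using P_trivial[OF gP _ cop3M] g1 by simp
    qed
    have "{g, g [^] (2::nat), inv g} \<subseteq> Z" using gZ g2Z giZ by auto
    then have "card {g, g [^] (2::nat), inv g} \<le> card Z" by (intro card_mono) (use finQ Z_def in auto)
    moreover have "card {g, g [^] (2::nat), inv g} = 3" using d1 d2 d3 by simp
    ultimately show False using cZ by simp
  next
    case False
    then have m8: "m = 8" using m28 by simp
    have "18 * int (card Z) = 0" using Zsum m8 MNi unfolding kk_def lam_def mu_def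
      by (simp add: algebra_simps power2_eq_square)
    then have Z0: "Z = {}" using finQ Z_def by simp
    have E36: "EE g = 3 \<or> EE g = 6" if g: "g \<in> Q" for g
    proof -
      have gP: "g \<in> PP" and g1: "g \<noteq> \<one>" using g unfolding Q_def by auto
      have "3 dvd int (EE g)" using E_mod3[OF gP] g1 by simp
      then have "3 dvd EE g" by presburger
      then obtain c where c: "EE g = 3 * c" by blast
      have "c \<le> 3" using EE_le9[OF gP] c by simp
      moreover have "EE g \<noteq> 0 \<and> EE g \<noteq> 9" using Z0 g unfolding Z_def by auto
      ultimately show ?thesis using c by auto
    qed
    have EinD: "EE g = (if g \<in> D then 3 else 6)" if g: "g \<in> Q" for g
    proof -
      have gP: "g \<in> PP" using g unfolding Q_def by auto
      show ?thesis using E36[OF g] E_parity[OF gP] by auto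
    qed
    define b1 where "b1 = bK \<one>"
    have b1D: "b1 = card (D \<inter> Q)"
    proof -
      have "D \<inter> PP = D \<inter> Q" unfolding Q_def using one_notin by auto
      then show ?thesis unfolding b1_def bK_one by simp
    qed
    have "(\<Sum>g\<in>Q. int (EE g)) = (\<Sum>g\<in>Q. if g \<in> D then 3 else 6)"
      by (rule sum.cong) (auto simp: EinD)
    also have "\<dots> = 3 * int (card (Q \<inter> D)) + 6 * int (card (Q - D))"
      using finQ by (simp add: sum.If_cases Diff_eq)
    also have "card (Q \<inter> D) = b1" using b1D by (simp add: Int_commute)
    also have "card (Q - D) = card Q - b1"
    proof -
      have "Q - D = Q - (D \<inter> Q)" by auto
      then show ?thesis using b1D finQ by (simp add: card_Diff_subset)
    qed
    finally have lin: "kk - 8 = 3 * int b1 + 6 * int (card Q - b1)" using S1 m8 by simp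
    have b1le: "b1 \<le> card Q" using b1D finQ by (simp add: card_mono)
    have lin2: "kk - 8 = 3 * int b1 + 6 * (int M - 1 - int b1)"
      using lin b1le cardQ M_gt1 by (simp add: of_nat_diff)
    have b1val: "int b1 = 2 * (u + 1) * (u + 2)"
    proof -
      have "3 * int b1 = 3 * (2 * (u + 1) * (u + 2))" using lin2 MNi unfolding kk_def
        by (simp add: algebra_simps power2_eq_square)
      then show ?thesis by simp
    qed
    define R where "R = KK - {\<one>}"
    have finR: "finite R" unfolding R_def using finK by simp
    have cardR: "card R = 8" unfolding R_def using card_K9 one_K finK by simp
    have T1: "(\<Sum>h\<in>R. int (bK h)) = kk - int b1"
    proof -
      have "(\<Sum>h\<in>KK. int (bK h)) = int (card D)" using sumB by (metis of_nat_sum)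
      moreover have "(\<Sum>h\<in>KK. int (bK h)) = int (bK \<one>) + (\<Sum>h\<in>R. int (bK h))"
        unfolding R_def using finK one_K by (simp add: sum.remove)
      ultimately show ?thesis using cardD' unfolding b1_def by simp
    qed
    have T2: "(\<Sum>h\<in>R. int (bK h) ^ 2) = kk + lam * int b1 + mu * (int M - 1 - int b1) - int b1 ^ 2"
    proof -
      have "(\<Sum>h\<in>KK. int (bK h) ^ 2) = int (\<Sum>h\<in>KK. bK h ^ 2)" by (simp add: of_nat_sum)
      also have "\<dots> = kk + lam * int b1 + mu * (int M - 1 - int b1)" using sumB2 unfolding b1_def .
      finally have "(\<Sum>h\<in>KK. int (bK h) ^ 2) = kk + lam * int b1 + mu * (int M - 1 - int b1)" .
      moreover have "(\<Sum>h\<in>KK. int (bK h) ^ 2) = int (bK \<one>) ^ 2 + (\<Sum>h\<in>R. int (bK h) ^ 2)"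
        unfolding R_def using finK one_K by (simp add: sum.remove)
      ultimately show ?thesis unfolding b1_def by simp
    qed
    have cs: "(\<Sum>h\<in>R. int (bK h)) ^ 2 \<le> int (card R) * (\<Sum>h\<in>R. int (bK h) ^ 2)"
      by (rule cs_int[OF finR])
    then have ineq: "(kk - int b1) ^ 2 \<le> 8 * (kk + lam * int b1 + mu * (int M - 1 - int b1) - int b1 ^ 2)"
      using T1 T2 cardR by simp
    have "8 * (kk + lam * int b1 + mu * (int M - 1 - int b1) - int b1 ^ 2) - (kk - int b1) ^ 2 = -192 * ((u + 1) * (u + 2))"
      unfolding b1val MNi kk_def lam_def mu_def by (simp add: algebra_simps power2_eq_square)
    moreover have "(u + 1) * (u + 2) > 0" using upos by simp
    ultimately show False using ineq by simp
  qed
qed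

end

theorem theorem6:
  fixes G (structure) and p s :: nat
  assumes "comm_group G" and "finite (carrier G)"
    and "card (carrier G) = 9 * p ^ (4 * s)"
    and "Factorial_Ring.prime p" and "p \<ge> 5" and "s > 0"
  shows "let r = (3 * int p ^ (2 * s) - 5) div 2 in
         \<not> (\<exists>D. is_pds G D (9 * int p ^ (4 * s)) (r * (3 * int p ^ (2 * s) + 1))
                  (- 3 * int p ^ (2 * s) + r ^ 2 + 3 * r) (r ^ 2 + r))"
proof -
  note cg = assms(1) and finG = assms(2) and cardG = assms(3) and pp = assms(4) and p5 = assms(5) and s0 = assms(6)
  have podd: "odd p" using prime_odd_nat[OF pp] p5 by simp
  define N where "N = int p ^ (2 * s)"
  have Nodd: "odd N" unfolding N_def using podd by simp
  define u where "u = N div 2"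
  have Nu: "N = 2 * u + 1" unfolding u_def using Nodd odd_two_times_div_two_succ[of N] by simp
  have Npos: "N > 0" unfolding N_def using p5 by simp
  have upos: "u \<ge> 0" unfolding u_def using Npos by simp
  have rdef: "(3 * int p ^ (2 * s) - 5) div 2 = 3 * u - 1"
  proof -
    have "3 * int p ^ (2 * s) - 5 = 2 * (3 * u - 1)" using Nu unfolding N_def by simp
    then show ?thesis by simp
  qed
  have pN: "int p ^ (2 * s) = 2 * u + 1" using Nu unfolding N_def .
  have p4: "int p ^ (4 * s) = (2 * u + 1) ^ 2"
  proof -
    have "int p ^ (4 * s) = (int p ^ (2 * s)) ^ 2" by (simp add: power_mult[symmetric] mult.commute)
    then show ?thesis using pN by simp
  qed
  have key: "\<not> (\<exists>D. is_pds G D (9 * (2 * u + 1)\<^sup>2) ((3 * u - 1) * (3 * (2 * u + 1) + 1))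
       (- 3 * (2 * u + 1) + (3 * u - 1)\<^sup>2 + 3 * (3 * u - 1)) ((3 * u - 1)\<^sup>2 + (3 * u - 1)))"
  proof
    assume "\<exists>D. is_pds G D (9 * (2 * u + 1)\<^sup>2) ((3 * u - 1) * (3 * (2 * u + 1) + 1))
       (- 3 * (2 * u + 1) + (3 * u - 1)\<^sup>2 + 3 * (3 * u - 1)) ((3 * u - 1)\<^sup>2 + (3 * u - 1))"
    then obtain D where D: "is_pds G D (9 * (2 * u + 1)\<^sup>2) ((3 * u - 1) * (3 * (2 * u + 1) + 1))
       (- 3 * (2 * u + 1) + (3 * u - 1)\<^sup>2 + 3 * (3 * u - 1)) ((3 * u - 1)\<^sup>2 + (3 * u - 1))" by blast
    have Dsub: "D \<subseteq> carrier G" and cD: "int (card D) = (3 * u - 1) * (3 * (2 * u + 1) + 1)"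
      and pdsx: "\<forall>x\<in>carrier G - {\<one>}. int (card {(g, h). g \<in> D \<and> h \<in> D \<and> g \<noteq> h \<and> g \<otimes> inv h = x}) =
        (if x \<in> D then - 3 * (2 * u + 1) + (3 * u - 1)\<^sup>2 + 3 * (3 * u - 1) else (3 * u - 1)\<^sup>2 + (3 * u - 1))"
      using D unfolding is_pds_def by auto
    have MN: "int (p ^ (4 * s)) = (2 * u + 1) ^ 2" using p4 by simp
    interpret pdsl G D "p ^ (4 * s)" p "4 * s" u
    proof (rule pdsl.intro[OF cg], rule pdsl_axioms.intro)
      show "finite (carrier G)" by (rule finG)
      show "card (carrier G) = 9 * p ^ (4 * s)" by (rule cardG)
      show "p ^ (4 * s) = p ^ (4 * s)" by simp
      show "0 < 4 * s" using s0 by simp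
      show "Factorial_Ring.prime p" by (rule pp)
      show "5 \<le> p" by (rule p5)
      show "int (p ^ (4 * s)) = (2 * u + 1)\<^sup>2" by (rule MN)
      show "0 \<le> u" by (rule upos)
      show "D \<subseteq> carrier G" by (rule Dsub)
      show "int (card D) = (3 * u - 1) * (3 * (2 * u + 1) + 1)" by (rule cD)
      show "int (card (cset G D x)) = (if x \<in> D then - 3 * (2 * u + 1) + (3 * u - 1)\<^sup>2 + 3 * (3 * u - 1) else (3 * u - 1)\<^sup>2 + (3 * u - 1))"
        if "x \<in> carrier G - {\<one>}" for x
        using pdsx that unfolding cset_def by blast
    qed
    show False by (rule contradiction)
  qed
  have rdef2: "(3 * (2 * u + 1) - 5) div 2 = 3 * u - 1" using rdef pN by simp
  show ?thesis unfolding Let_def pN p4 rdef2 by (rule key)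
qed

end
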